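(* Let $\mathbf W$ be a general channel with finite input alphabet $\mathcal X$ and arbitrary output alphabet $\mathcal Y$, let $\mathbf c$ be a general cost function and $\Gamma\in\mathbb R$, and suppose $\mathbf W$ satisfies the strong converse property with input cost constraint $\Gamma$. Then for all $\mu\ge0,\lambda\ge0$ with $\mu+\lambda<1$, $D(\mu,\lambda,\Gamma|\mathbf W)=C_s(\Gamma|\mathbf W)$.
   Context: A general channel $\mathbf W=\{W^n\}$ with input alphabet $\mathcal X$ and output alphabet $\mathcal Y$ is a sequence of transition probabilities $W^n(\cdot|\mathbf x)$ on $\mathcal Y^n$, $\mathbf x\in\mathcal X^n$. A general cost function is a sequence of functions $c_n:\mathcal X^n\to\mathbb R$; $\mathcal X^n(\Gamma)=\{\mathbf x:\frac1n c_n(\mathbf x)\le\Gamma\}$. $QW^n(B)=\sum_{\mathbf x}Q(\mathbf x)W^n(B|\mathbf x)$. Transmission codes: an $(n,M_n,\varepsilon_n,\Gamma)$ code is an encoder $\varphi_n:\{1,\dots,M_n\}\to\mathcal X^n$ with $\frac1nc_n(\varphi_n(i))\le\Gamma$ for all $i$, and a decoder $\psi_n:\mathcal Y^n\to\{1,\dots,M_n\}$, with $\varepsilon_n=\frac1{M_n}\sum_iW^n(\mathcal D_i^c|\varphi_n(i))$, $\mathcal D_i=\psi_n^{-1}(i)$. $C_s(\Gamma|\mathbf W)$ is the supremum of $R$ such that such codes exist with $\varepsilon_n\to0$ and $\liminf\frac1n\log M_n\ge R$. The strong converse property with input cost constraint $\Gamma$: every sequence of such codes with $\liminf\frac1n\log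 M_n>C_s(\Gamma|\mathbf W)$ has $\varepsilon_n\to1$. Identification codes: an $(n,N_n,\mu_n,\lambda_n,\Gamma)$ code consists of distributions $Q_1,\dots,Q_{N_n}$ on $\mathcal X^n$ with $Q_i(\mathcal X^n(\Gamma))=1$ and (not necessarily disjoint) sets $\mathcal D_1,\dots,\mathcal D_{N_n}\subset\mathcal Y^n$, with $\mu_n=\max_iQ_iW^n(\mathcal D_i^c)$, $\lambda_n=\max_{i\ne j}Q_jW^n(\mathcal D_i)$. $R$ is $(\mu,\lambda,\Gamma)$-achievable if such codes exist with $\limsup\mu_n\le\mu$, $\limsup\lambda_n\le\lambda$, $\liminf\frac1n\log\log N_n\ge R$; $D(\mu,\lambda,\Gamma|\mathbf W)$ is the supremum of such $R$. *)

theory Defs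
  imports "HOL-Probability.Probability"
begin

text \<open>The output space Y^n is an arbitrary measurable space Y n (outputs of type 'b).
  W n x is the transition probability W^n(.|x) on Y n.\<close>

definition general_channel :: "(nat \<Rightarrow> 'a list \<Rightarrow> 'b measure) \<Rightarrow> (nat \<Rightarrow> 'b measure) \<Rightarrow> bool" where
  "general_channel W Y \<longleftrightarrow>
     (\<forall>n x. length x = n \<longrightarrow> prob_space (W n x) \<and> sets (W n x) = sets (Y n))"

definition cost_set :: "(nat \<Rightarrow> 'a list \<Rightarrow> real) \<Rightarrow> real \<Rightarrow> nat \<Rightarrow> 'a list set" where
  "cost_set c \<Gamma> n = {x. length x = n \<and> c n x / real n \<le> \<Gamma>}"

definition outprob :: "(nat \<Rightarrow> 'a list \<Rightarrow> 'b measure) \<Rightarrow> nat \<Rightarrow> 'a list pmf \<Rightarrow> 'b set \<Rightarrow> real" where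
  "outprob W n Q B = measure_pmf.expectation Q (\<lambda>x. measure (W n x) B)"

definition tcode ::
  "(nat \<Rightarrow> 'a list \<Rightarrow> 'b measure) \<Rightarrow> (nat \<Rightarrow> 'b measure) \<Rightarrow> (nat \<Rightarrow> 'a list \<Rightarrow> real) \<Rightarrow> real
   \<Rightarrow> nat \<Rightarrow> nat \<Rightarrow> (nat \<Rightarrow> 'a list) \<Rightarrow> ('b \<Rightarrow> nat) \<Rightarrow> real \<Rightarrow> bool" where
  "tcode W Y c \<Gamma> n M \<phi> \<psi> \<epsilon> \<longleftrightarrow>
     M \<ge> 1 \<and> (\<forall>i\<in>{1..M}. \<phi> i \<in> cost_set c \<Gamma> n) \<and>
     \<psi> \<in> measurable (Y n) (count_space {1..M}) \<and>
     \<epsilon> = (\<Sum>i=1..M. measure (W n (\<phi> i)) (space (Y n) - \<psi> -` {i})) / real M"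

definition tc_achievable ::
  "(nat \<Rightarrow> 'a list \<Rightarrow> 'b measure) \<Rightarrow> (nat \<Rightarrow> 'b measure) \<Rightarrow> (nat \<Rightarrow> 'a list \<Rightarrow> real) \<Rightarrow> real \<Rightarrow> real \<Rightarrow> bool" where
  "tc_achievable W Y c \<Gamma> R \<longleftrightarrow>
     (\<exists>M \<phi> \<psi> \<epsilon>. (\<forall>n\<ge>1. tcode W Y c \<Gamma> n (M n) (\<phi> n) (\<psi> n) (\<epsilon> n)) \<and>
        \<epsilon> \<longlonglongrightarrow> 0 \<and>
        Liminf sequentially (\<lambda>n. ereal (ln (real (M n)) / real n)) \<ge> ereal R)"

text \<open>C_s(Gamma|W), as an extended real (Sup of the empty set is -infinity).\<close>
definition Cs ::
  "(nat \<Rightarrow> 'a list \<Rightarrow> 'b measure) \<Rightarrow> (nat \<Rightarrow> 'b measure) \<Rightarrow> (nat \<Rightarrow> 'a list \<Rightarrow> real) \<Rightarrow> real \<Rightarrow> ereal" where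
  "Cs W Y c \<Gamma> = Sup {ereal R | R. tc_achievable W Y c \<Gamma> R}"

definition strong_converse ::
  "(nat \<Rightarrow> 'a list \<Rightarrow> 'b measure) \<Rightarrow> (nat \<Rightarrow> 'b measure) \<Rightarrow> (nat \<Rightarrow> 'a list \<Rightarrow> real) \<Rightarrow> real \<Rightarrow> bool" where
  "strong_converse W Y c \<Gamma> \<longleftrightarrow>
     (\<forall>M \<phi> \<psi> \<epsilon>. (\<forall>n\<ge>1. tcode W Y c \<Gamma> n (M n) (\<phi> n) (\<psi> n) (\<epsilon> n)) \<and>
        Liminf sequentially (\<lambda>n. ereal (ln (real (M n)) / real n)) > Cs W Y c \<Gamma>
        \<longrightarrow> \<epsilon> \<longlonglongrightarrow> 1)"

definition idcode ::
  "(nat \<Rightarrow> 'a list \<Rightarrow> 'b measure) \<Rightarrow> (nat \<Rightarrow> 'b measure) \<Rightarrow> (nat \<Rightarrow> 'a list \<Rightarrow> real) \<Rightarrow> real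
   \<Rightarrow> nat \<Rightarrow> nat \<Rightarrow> (nat \<Rightarrow> 'a list pmf) \<Rightarrow> (nat \<Rightarrow> 'b set) \<Rightarrow> ereal \<Rightarrow> ereal \<Rightarrow> bool" where
  "idcode W Y c \<Gamma> n N Q D mu lam \<longleftrightarrow>
     N \<ge> 1 \<and> (\<forall>i\<in>{1..N}. set_pmf (Q i) \<subseteq> cost_set c \<Gamma> n \<and> D i \<in> sets (Y n)) \<and>
     mu = (SUP i\<in>{1..N}. ereal (outprob W n (Q i) (space (Y n) - D i))) \<and>
     lam = (SUP ij\<in>{(i,j). i\<in>{1..N} \<and> j\<in>{1..N} \<and> i \<noteq> j}.
              ereal (outprob W n (Q (snd ij)) (D (fst ij))))"

definition id_achievable ::
  "(nat \<Rightarrow> 'a list \<Rightarrow> 'b measure) \<Rightarrow> (nat \<Rightarrow> 'b measure) \<Rightarrow> (nat \<Rightarrow> 'a list \<Rightarrow> real) \<Rightarrow> real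
   \<Rightarrow> real \<Rightarrow> real \<Rightarrow> real \<Rightarrow> bool" where
  "id_achievable W Y c \<Gamma> mu lam R \<longleftrightarrow>
     (\<exists>N Q D mus lams. (\<forall>n\<ge>1. idcode W Y c \<Gamma> n (N n) (Q n) (D n) (mus n) (lams n)) \<and>
        limsup mus \<le> ereal mu \<and> limsup lams \<le> ereal lam \<and>
        Liminf sequentially (\<lambda>n. ereal (ln (ln (real (N n))) / real n)) \<ge> ereal R)"

definition IDcap ::
  "(nat \<Rightarrow> 'a list \<Rightarrow> 'b measure) \<Rightarrow> (nat \<Rightarrow> 'b measure) \<Rightarrow> (nat \<Rightarrow> 'a list \<Rightarrow> real) \<Rightarrow> real
   \<Rightarrow> real \<Rightarrow> real \<Rightarrow> ereal" where
  "IDcap W Y c \<Gamma> mu lam = Sup {ereal R | R. id_achievable W Y c \<Gamma> mu lam R}"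

end

theory Submission
  imports Defs "HOL-Real_Asymp.Real_Asymp"
begin

lemma finite_set_Pi_pmf:
  assumes "finite A" "\<And>x. x \<in> A \<Longrightarrow> finite (set_pmf (p x))"
  shows "finite (set_pmf (Pi_pmf A d p))"
proof -
  have "set_pmf (Pi_pmf A d p) = PiE_dflt A d (set_pmf \<circ> p)"
    using assms(1) by (rule set_Pi_pmf)
  also have "\<dots> = (\<lambda>h x. if x \<in> A then h x else d) ` PiE A (set_pmf \<circ> p)"
    by (rule dflt_image_PiE[symmetric])
  also have "finite \<dots>" using assms by (intro finite_imageI finite_PiE) auto
  finally show ?thesis .
qed

lemma exists_le_expectation:
  fixes F :: "'a \<Rightarrow> real"
  assumes "finite (set_pmf M)"
  shows "\<exists>c\<in>set_pmf M. F c \<le> measure_pmf.expectation M F"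
proof (rule ccontr)
  assume "\<not> ?thesis"
  hence lt: "\<And>c. c \<in> set_pmf M \<Longrightarrow> measure_pmf.expectation M F < F c" by auto
  have "measure_pmf.expectation M F = (\<Sum>a\<in>set_pmf M. F a * pmf M a)"
    using assms by (intro integral_measure_pmf_real) auto
  also have "\<dots> > (\<Sum>a\<in>set_pmf M. measure_pmf.expectation M F * pmf M a)"
  proof (rule sum_strict_mono_ex1)
    show "finite (set_pmf M)" by fact
    show "\<forall>x\<in>set_pmf M. measure_pmf.expectation M F * pmf M x \<le> F x * pmf M x"
      using lt by (meson less_imp_le mult_right_mono pmf_nonneg)
    obtain a where a: "a \<in> set_pmf M" using set_pmf_not_empty[of M] by blast
    show "\<exists>a\<in>set_pmf M. measure_pmf.expectation M F * pmf M a < F a * pmf M a"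
      using a lt[OF a] pmf_positive[OF a] by (intro bexI[of _ a]) (simp add: mult_strict_right_mono)
  qed
  also have "(\<Sum>a\<in>set_pmf M. measure_pmf.expectation M F * pmf M a) = measure_pmf.expectation M F"
    using assms by (simp add: sum_distrib_left[symmetric] sum_pmf_eq_1)
  finally show False by simp
qed

lemma Pi_pmf_pair_marginal:
  assumes "finite A" "m \<in> A" "k \<in> A" "m \<noteq> k"
  shows "map_pmf (\<lambda>c. (c m, c k)) (Pi_pmf A d p) = pair_pmf (p m) (p k)"
proof -
  define A' where "A' = A - {m}"
  have A: "A = insert m A'" "m \<notin> A'" "finite A'" "k \<in> A'"
    using assms by (auto simp: A'_def)
  have "map_pmf (\<lambda>c. (c m, c k)) (Pi_pmf A d p) =
        map_pmf (\<lambda>c. (c m, c k)) (map_pmf (\<lambda>(y,f). f(m:=y)) (pair_pmf (p m) (Pi_pmf A' d p)))"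
    using A by (simp add: Pi_pmf_insert)
  also have "\<dots> = map_pmf (\<lambda>(a, b). (id a, (\<lambda>f. f k) b)) (pair_pmf (p m) (Pi_pmf A' d p))"
    unfolding pmf.map_comp using assms by (intro pmf.map_cong) (auto simp: o_def)
  also have "\<dots> = pair_pmf (p m) (p k)"
    unfolding map_pair using A by (simp add: Pi_pmf_component)
  finally show ?thesis .
qed

lemma expectation_Pi_component:
  fixes f :: "'b \<Rightarrow> real"
  assumes "finite A" "m \<in> A"
  shows "measure_pmf.expectation (Pi_pmf A d p) (\<lambda>c. f (c m)) = measure_pmf.expectation (p m) f"
proof -
  have "measure_pmf.expectation (Pi_pmf A d p) (\<lambda>c. f (c m)) =
        measure_pmf.expectation (map_pmf (\<lambda>c. c m) (Pi_pmf A d p)) f" by simp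
  also have "\<dots> = measure_pmf.expectation (p m) f" using assms by (simp add: Pi_pmf_component)
  finally show ?thesis .
qed

lemma expectation_pair_pmf_mult:
  fixes f g :: "'b \<Rightarrow> real"
  assumes "finite (set_pmf P)" "finite (set_pmf Q)"
  shows "measure_pmf.expectation (pair_pmf P Q) (\<lambda>z. f (fst z) * g (snd z)) =
         measure_pmf.expectation P f * measure_pmf.expectation Q g"
proof -
  have "measure_pmf.expectation (pair_pmf P Q) (\<lambda>z. f (fst z) * g (snd z)) =
     (\<Sum>z\<in>set_pmf P \<times> set_pmf Q. f (fst z) * g (snd z) * pmf (pair_pmf P Q) z)"
    using assms by (intro integral_measure_pmf_real) auto
  also have "\<dots> = (\<Sum>a\<in>set_pmf P. \<Sum>b\<in>set_pmf Q. (f a * pmf P a) * (g b * pmf Q b))"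
  proof -
    have "(\<Sum>z\<in>set_pmf P \<times> set_pmf Q. f (fst z) * g (snd z) * pmf (pair_pmf P Q) z) =
      (\<Sum>z\<in>set_pmf P \<times> set_pmf Q. (f (fst z) * pmf P (fst z)) * (g (snd z) * pmf Q (snd z)))"
      by (intro sum.cong refl) (auto simp: pmf_pair)
    then show ?thesis by (simp add: sum.cartesian_product case_prod_unfold)
  qed
  also have "\<dots> = (\<Sum>a\<in>set_pmf P. f a * pmf P a) * (\<Sum>b\<in>set_pmf Q. g b * pmf Q b)"
    by (simp add: sum_product)
  also have "\<dots> = measure_pmf.expectation P f * measure_pmf.expectation Q g"
    using assms by (simp add: integral_measure_pmf_real)
  finally show ?thesis .
qed

lemma expectation_Pi_pair:
  fixes f g :: "'b \<Rightarrow> real"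
  assumes "finite A" "m \<in> A" "k \<in> A" "m \<noteq> k" "finite (set_pmf (p m))" "finite (set_pmf (p k))"
  shows "measure_pmf.expectation (Pi_pmf A d p) (\<lambda>c. f (c m) * g (c k)) =
         measure_pmf.expectation (p m) f * measure_pmf.expectation (p k) g"
proof -
  have "measure_pmf.expectation (Pi_pmf A d p) (\<lambda>c. f (c m) * g (c k)) =
        measure_pmf.expectation (map_pmf (\<lambda>c. (c m, c k)) (Pi_pmf A d p)) (\<lambda>z. f (fst z) * g (snd z))"
    by simp
  also have "\<dots> = measure_pmf.expectation (pair_pmf (p m) (p k)) (\<lambda>z. f (fst z) * g (snd z))"
    using assms by (simp add: Pi_pmf_pair_marginal)
  also have "\<dots> = measure_pmf.expectation (p m) f * measure_pmf.expectation (p k) g"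
    using assms by (intro expectation_pair_pmf_mult)
  finally show ?thesis .
qed

lemma exp_abs_le_sqrt:
  fixes Z :: "'a \<Rightarrow> real"
  assumes "finite (set_pmf M)"
  shows "measure_pmf.expectation M (\<lambda>x. \<bar>Z x\<bar>) \<le> sqrt (measure_pmf.expectation M (\<lambda>x. (Z x)^2))"
proof -
  have "0 \<le> measure_pmf.variance M (\<lambda>x. \<bar>Z x\<bar>)" by (rule measure_pmf.variance_positive)
  also have "\<dots> = measure_pmf.expectation M (\<lambda>x. (Z x)^2) - (measure_pmf.expectation M (\<lambda>x. \<bar>Z x\<bar>))^2"
    using assms by (subst measure_pmf.variance_eq) (auto intro: integrable_measure_pmf_finite)
  finally show ?thesis by (intro real_le_rsqrt) simp
qed

lemma second_moment_Pi:
  fixes U :: "'x \<Rightarrow> real"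
  assumes fin: "finite (set_pmf P)" and mean0: "measure_pmf.expectation P U = 0"
  shows "measure_pmf.expectation (Pi_pmf {..<M} d (\<lambda>_. P)) (\<lambda>c. (\<Sum>m<M. U (c m))^2)
       = real M * measure_pmf.expectation P (\<lambda>x. (U x)^2)"
proof -
  let ?Pi = "Pi_pmf {..<M} d (\<lambda>_. P)"
  have finPi: "finite (set_pmf ?Pi)" using fin by (intro finite_set_Pi_pmf) auto
  have int: "integrable (measure_pmf ?Pi) f" for f :: "_ \<Rightarrow> real"
    using finPi by (rule integrable_measure_pmf_finite)
  have "measure_pmf.expectation ?Pi (\<lambda>c. (\<Sum>m<M. U (c m))^2) =
        measure_pmf.expectation ?Pi (\<lambda>c. \<Sum>m<M. \<Sum>k<M. U (c m) * U (c k))"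
    by (simp add: power2_eq_square sum_product)
  also have "\<dots> = (\<Sum>m<M. \<Sum>k<M. measure_pmf.expectation ?Pi (\<lambda>c. U (c m) * U (c k)))"
    by (simp add: int Bochner_Integration.integral_sum)
  also have "\<dots> = (\<Sum>m<M. \<Sum>k<M. if m = k then measure_pmf.expectation P (\<lambda>x. (U x)^2) else 0)"
  proof (intro sum.cong refl)
    fix m k assume mk: "m \<in> {..<M}" "k \<in> {..<M}"
    show "measure_pmf.expectation ?Pi (\<lambda>c. U (c m) * U (c k)) =
          (if m = k then measure_pmf.expectation P (\<lambda>x. (U x)^2) else 0)"
    proof (cases "m = k")
      case True
      then show ?thesis using mk
        using expectation_Pi_component[where A="{..<M}" and m=m and d=d and p="\<lambda>_. P" and f="\<lambda>x. (U x)^2"]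
        by (simp add: power2_eq_square)
    next
      case False
      then show ?thesis using mk fin mean0 expectation_Pi_pair[where A="{..<M}" and m=m and k=k and p="\<lambda>_. P" and f=U and g=U and d=d]
        by simp
    qed
  qed
  also have "\<dots> = real M * measure_pmf.expectation P (\<lambda>x. (U x)^2)"
    by (simp add: sum.delta)
  finally show ?thesis .
qed

lemma soft_covering:
  fixes P :: "'x pmf" and w :: "'x \<Rightarrow> 'v \<Rightarrow> real" and V :: "'v set"
  assumes finP: "finite (set_pmf P)" and finV: "finite V"
    and wnn: "\<And>x v. w x v \<ge> 0" and M: "M > 0" and K: "K > 0"
  defines "pw \<equiv> \<lambda>v. measure_pmf.expectation P (\<lambda>x. w x v)"
  defines "\<beta> \<equiv> measure_pmf.expectation P (\<lambda>x. \<Sum>v\<in>V. if K * pw v < w x v then w x v else 0)"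
  shows "measure_pmf.expectation (Pi_pmf {..<M} d (\<lambda>_. P))
           (\<lambda>c. \<Sum>v\<in>V. \<bar>(\<Sum>m<M. w (c m) v) / real M - pw v\<bar>)
         \<le> 2 * \<beta> + sqrt (K / real M) * (\<Sum>v\<in>V. pw v)"
proof -
  let ?Pi = "Pi_pmf {..<M} d (\<lambda>_. P)"
  have finPi: "finite (set_pmf ?Pi)" using finP by (intro finite_set_Pi_pmf) auto
  have intPi: "integrable (measure_pmf ?Pi) f" for f :: "_ \<Rightarrow> real"
    using finPi by (rule integrable_measure_pmf_finite)
  have intP: "integrable (measure_pmf P) f" for f :: "_ \<Rightarrow> real"
    using finP by (rule integrable_measure_pmf_finite)
  define w1 where "w1 = (\<lambda>x v. if w x v \<le> K * pw v then w x v else 0)"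
  define w2 where "w2 = (\<lambda>x v. if K * pw v < w x v then w x v else 0)"
  define pw1 where "pw1 = (\<lambda>v. measure_pmf.expectation P (\<lambda>x. w1 x v))"
  define pw2 where "pw2 = (\<lambda>v. measure_pmf.expectation P (\<lambda>x. w2 x v))"
  have wsplit: "w x v = w1 x v + w2 x v" for x v by (auto simp: w1_def w2_def)
  have w2nn: "w2 x v \<ge> 0" for x v using wnn by (auto simp: w2_def)
  have w1nn: "w1 x v \<ge> 0" for x v using wnn by (auto simp: w1_def)
  have pwnn: "pw v \<ge> 0" for v unfolding pw_def using wnn by (intro integral_nonneg_AE) auto
  have pw2nn: "pw2 v \<ge> 0" for v unfolding pw2_def using w2nn by (intro integral_nonneg_AE) auto
  have pwsplit: "pw v = pw1 v + pw2 v" for v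
    unfolding pw_def pw1_def pw2_def wsplit by (simp add: intP)
  have beta: "\<beta> = (\<Sum>v\<in>V. pw2 v)"
    unfolding \<beta>_def pw2_def w2_def by (simp add: intP Bochner_Integration.integral_sum)
  define Z where "Z = (\<lambda>c v. (\<Sum>m<M. w1 (c m) v - pw1 v) / real M)"
  have pointwise: "\<bar>(\<Sum>m<M. w (c m) v) / real M - pw v\<bar>
      \<le> \<bar>Z c v\<bar> + (\<Sum>m<M. w2 (c m) v) / real M + pw2 v" for c v
  proof -
    have "(\<Sum>m<M. w (c m) v) / real M - pw v
        = Z c v + (\<Sum>m<M. w2 (c m) v) / real M - pw2 v"
      using M unfolding Z_def wsplit pwsplit
      by (simp add: sum.distrib sum_subtractf field_simps)
    moreover have "(\<Sum>m<M. w2 (c m) v) / real M \<ge> 0"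
      using w2nn by (intro divide_nonneg_nonneg sum_nonneg) auto
    ultimately show ?thesis using pw2nn[of v] by linarith
  qed
  have EZ: "measure_pmf.expectation ?Pi (\<lambda>c. \<bar>Z c v\<bar>) \<le> sqrt (K / real M) * pw v" for v
  proof -
    define U where "U = (\<lambda>x. w1 x v - pw1 v)"
    have mean0: "measure_pmf.expectation P U = 0"
      unfolding U_def pw1_def by (simp add: intP prob_space.prob_space measure_pmf.prob_space_axioms)
    have "measure_pmf.expectation ?Pi (\<lambda>c. \<bar>Z c v\<bar>) \<le> sqrt (measure_pmf.expectation ?Pi (\<lambda>c. (Z c v)^2))"
      using finPi by (rule exp_abs_le_sqrt)
    also have "measure_pmf.expectation ?Pi (\<lambda>c. (Z c v)^2) =
        measure_pmf.expectation ?Pi (\<lambda>c. (\<Sum>m<M. U (c m))^2) / (real M)^2"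
      unfolding Z_def U_def by (simp add: power_divide)
    also have "\<dots> = measure_pmf.expectation P (\<lambda>x. (U x)^2) / real M"
      using M by (subst second_moment_Pi[OF finP mean0]) (simp add: power2_eq_square)
    also have "measure_pmf.expectation P (\<lambda>x. (U x)^2) \<le> K * (pw v)^2"
    proof -
      have "measure_pmf.expectation P (\<lambda>x. (U x)^2) = measure_pmf.variance P (\<lambda>x. w1 x v)"
        unfolding U_def pw1_def by simp
      also have "\<dots> = measure_pmf.expectation P (\<lambda>x. (w1 x v)^2) - (pw1 v)^2"
        unfolding pw1_def by (subst measure_pmf.variance_eq) (auto simp: intP)
      also have "\<dots> \<le> measure_pmf.expectation P (\<lambda>x. (w1 x v)^2)" by simp
      also have "\<dots> \<le> measure_pmf.expectation P (\<lambda>x. K * pw v * w1 x v)"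
      proof (intro integral_mono intP)
        fix x show "(w1 x v)^2 \<le> K * pw v * w1 x v"
          using w1nn[of x v] by (auto simp: w1_def power2_eq_square intro: mult_right_mono)
      qed
      also have "\<dots> = K * pw v * pw1 v" unfolding pw1_def by simp
      also have "\<dots> \<le> K * pw v * pw v"
        using K pwnn[of v] pw2nn[of v] pwsplit[of v] by (intro mult_left_mono) auto
      finally show ?thesis by (simp add: power2_eq_square)
    qed
    hence "measure_pmf.expectation P (\<lambda>x. (U x)^2) / real M \<le> K * (pw v)^2 / real M"
      using M by (simp add: divide_right_mono)
    hence "sqrt (measure_pmf.expectation P (\<lambda>x. (U x)^2) / real M) \<le> sqrt (K * (pw v)^2 / real M)"
      by (rule real_sqrt_le_mono)
    also have "sqrt (K * (pw v)^2 / real M) = sqrt (K / real M) * pw v"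
      using pwnn[of v] by (simp add: real_sqrt_mult real_sqrt_divide)
    finally show ?thesis by simp
  qed
  have Ew2: "measure_pmf.expectation ?Pi (\<lambda>c. (\<Sum>m<M. w2 (c m) v) / real M) = pw2 v" for v
  proof -
    have "measure_pmf.expectation ?Pi (\<lambda>c. (\<Sum>m<M. w2 (c m) v) / real M)
        = (\<Sum>m<M. measure_pmf.expectation ?Pi (\<lambda>c. w2 (c m) v)) / real M"
      by (simp add: intPi Bochner_Integration.integral_sum)
    also have "\<dots> = (\<Sum>m<M. pw2 v) / real M"
      unfolding pw2_def by (intro arg_cong2[where f="(/)"] sum.cong refl)
        (simp add: expectation_Pi_component[where f="\<lambda>x. w2 x v"])
    also have "\<dots> = pw2 v" using M by simp
    finally show ?thesis .
  qed
  have "measure_pmf.expectation ?Pi (\<lambda>c. \<Sum>v\<in>V. \<bar>(\<Sum>m<M. w (c m) v) / real M - pw v\<bar>)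
     \<le> measure_pmf.expectation ?Pi (\<lambda>c. \<Sum>v\<in>V. \<bar>Z c v\<bar> + (\<Sum>m<M. w2 (c m) v) / real M + pw2 v)"
    by (intro integral_mono intPi sum_mono pointwise)
  also have "\<dots> = (\<Sum>v\<in>V. measure_pmf.expectation ?Pi (\<lambda>c. \<bar>Z c v\<bar> + (\<Sum>m<M. w2 (c m) v) / real M + pw2 v))"
    by (rule Bochner_Integration.integral_sum) (rule intPi)
  also have "\<dots> = (\<Sum>v\<in>V. measure_pmf.expectation ?Pi (\<lambda>c. \<bar>Z c v\<bar>) + pw2 v + pw2 v)"
  proof (intro sum.cong refl)
    fix v
    have "measure_pmf.expectation ?Pi (\<lambda>c. \<bar>Z c v\<bar> + (\<Sum>m<M. w2 (c m) v) / real M + pw2 v)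
       = measure_pmf.expectation ?Pi (\<lambda>c. \<bar>Z c v\<bar>) + measure_pmf.expectation ?Pi (\<lambda>c. (\<Sum>m<M. w2 (c m) v) / real M) + pw2 v"
      by (simp add: intPi prob_space.prob_space measure_pmf.prob_space_axioms)
    then show "measure_pmf.expectation ?Pi (\<lambda>c. \<bar>Z c v\<bar> + (\<Sum>m<M. w2 (c m) v) / real M + pw2 v)
       = measure_pmf.expectation ?Pi (\<lambda>c. \<bar>Z c v\<bar>) + pw2 v + pw2 v"
      by (simp only: Ew2)
  qed
  also have "\<dots> \<le> (\<Sum>v\<in>V. sqrt (K / real M) * pw v + pw2 v + pw2 v)"
    by (intro sum_mono add_right_mono EZ)
  also have "\<dots> = 2 * \<beta> + sqrt (K / real M) * (\<Sum>v\<in>V. pw v)"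
    by (simp add: beta sum.distrib sum_distrib_left)
  finally show ?thesis .
qed

lemma feinstein_pointwise:
  fixes w :: "'x \<Rightarrow> 'v \<Rightarrow> real" and c :: "nat \<Rightarrow> 'x" and v :: 'v and pw K :: real
  assumes wnn: "\<And>x v. w x v \<ge> 0" and m: "m \<in> {1..M}"
  defines "dec \<equiv> (if \<exists>k\<in>{1..M}. K * pw < w (c k) v
                  then LEAST k. k \<in> {1..M} \<and> K * pw < w (c k) v else 1)"
  shows "(if dec \<noteq> m then w (c m) v else 0) \<le>
         (if w (c m) v \<le> K * pw then w (c m) v else 0) +
         (\<Sum>k\<in>{1..M} - {m}. if K * pw < w (c k) v then w (c m) v else 0)"
proof -
  have sumnn: "0 \<le> (\<Sum>k\<in>{1..M} - {m}. if K * pw < w (c k) v then w (c m) v else 0)"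
    using wnn by (intro sum_nonneg) auto
  show ?thesis
  proof (cases "dec = m")
    case True then show ?thesis using sumnn wnn[of "c m" v] by auto
  next
    case False
    show ?thesis
    proof (cases "w (c m) v \<le> K * pw")
      case True then show ?thesis using sumnn False by auto
    next
      case le: False
      let ?Q = "\<lambda>k. k \<in> {1..M} \<and> K * pw < w (c k) v"
      have Qm: "?Q m" using m le by auto
      hence ex: "\<exists>k\<in>{1..M}. K * pw < w (c k) v" by auto
      hence dec: "dec = (LEAST k. ?Q k)" unfolding dec_def by simp
      have Qd: "?Q dec" unfolding dec by (rule LeastI[of ?Q m, OF Qm])
      have "dec \<le> m" unfolding dec by (rule Least_le[of ?Q m, OF Qm])
      have "(if K * pw < w (c dec) v then w (c m) v else 0) \<le>
            (\<Sum>k\<in>{1..M} - {m}. if K * pw < w (c k) v then w (c m) v else 0)"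
        using False Qd wnn by (intro member_le_sum[where f="\<lambda>k. if K * pw < w (c k) v then w (c m) v else 0"]) auto
      then show ?thesis using Qd False le by auto
    qed
  qed
qed

lemma feinstein:
  fixes P :: "'x pmf" and w :: "'x \<Rightarrow> 'v \<Rightarrow> real" and V :: "'v set" and M :: nat and K :: real
  assumes finP: "finite (set_pmf P)" and finV: "finite V"
    and wnn: "\<And>x v. w x v \<ge> 0" and K: "K > 0"
  defines "pw \<equiv> \<lambda>v. measure_pmf.expectation P (\<lambda>x. w x v)"
  defines "dec \<equiv> \<lambda>c v. (if \<exists>k\<in>{1..M}. K * pw v < w (c k) v
                  then LEAST k. k \<in> {1..M} \<and> K * pw v < w (c k) v else 1)"
  defines "\<gamma> \<equiv> measure_pmf.expectation P (\<lambda>x. \<Sum>v\<in>V. if w x v \<le> K * pw v then w x v else 0)"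
  shows "measure_pmf.expectation (Pi_pmf {1..M} d (\<lambda>_. P))
           (\<lambda>c. \<Sum>m\<in>{1..M}. \<Sum>v\<in>V. if dec c v \<noteq> m then w (c m) v else 0)
         \<le> real M * \<gamma> + real M * (real M - 1) / K * (\<Sum>v\<in>V. pw v)"
proof -
  let ?Pi = "Pi_pmf {1..M} d (\<lambda>_. P)"
  have finPi: "finite (set_pmf ?Pi)" using finP by (intro finite_set_Pi_pmf) auto
  have intPi: "integrable (measure_pmf ?Pi) f" for f :: "_ \<Rightarrow> real"
    using finPi by (rule integrable_measure_pmf_finite)
  have intP: "integrable (measure_pmf P) f" for f :: "_ \<Rightarrow> real"
    using finP by (rule integrable_measure_pmf_finite)
  define A where "A = (\<lambda>x v. if w x v \<le> K * pw v then w x v else 0)"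
  define B where "B = (\<lambda>c m v. \<Sum>k\<in>{1..M} - {m}. if K * pw v < w (c k) v then w (c m) v else 0)"
  have pt: "(if dec c v \<noteq> m then w (c m) v else 0) \<le> A (c m) v + B c m v" if "m \<in> {1..M}" for c v m
    unfolding A_def B_def dec_def using feinstein_pointwise[where w=w and c=c and v=v and pw="pw v" and K=K and M=M, OF wnn that] by simp
  have EA: "measure_pmf.expectation ?Pi (\<lambda>c. \<Sum>v\<in>V. A (c m) v) = \<gamma>" if "m \<in> {1..M}" for m
    unfolding \<gamma>_def A_def using that
    by (subst expectation_Pi_component[where f="\<lambda>x. \<Sum>v\<in>V. if w x v \<le> K * pw v then w x v else 0"]) auto
  have pwnn: "pw v \<ge> 0" for v unfolding pw_def using wnn by (intro integral_nonneg_AE) auto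
  have EB1: "measure_pmf.expectation ?Pi (\<lambda>c. if K * pw v < w (c k) v then w (c m) v else 0) \<le> pw v / K"
    if "m \<in> {1..M}" "k \<in> {1..M}" "k \<noteq> m" for m k v
  proof -
    have "measure_pmf.expectation ?Pi (\<lambda>c. if K * pw v < w (c k) v then w (c m) v else 0)
        = measure_pmf.expectation ?Pi (\<lambda>c. w (c m) v * (if K * pw v < w (c k) v then 1 else 0))"
      by (intro Bochner_Integration.integral_cong) auto
    also have "\<dots> = pw v * measure_pmf.expectation P (\<lambda>x. if K * pw v < w x v then 1 else 0)"
      using expectation_Pi_pair[where A="{1..M}" and m=m and k=k and d=d and p="\<lambda>_. P" and f="\<lambda>x. w x v" and g="\<lambda>x. if K * pw v < w x v then 1 else 0"] that finP
      by (simp add: pw_def)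
    also have "\<dots> = measure_pmf.expectation P (\<lambda>x. pw v * (if K * pw v < w x v then 1 else 0))"
      by simp
    also have "\<dots> \<le> measure_pmf.expectation P (\<lambda>x. w x v / K)"
    proof (intro integral_mono intP)
      fix x show "pw v * (if K * pw v < w x v then 1 else 0) \<le> w x v / K"
        using K wnn[of x v] pwnn[of v] by (auto simp: field_simps)
    qed
    also have "\<dots> = pw v / K" unfolding pw_def by simp
    finally show ?thesis .
  qed
  have EB: "measure_pmf.expectation ?Pi (\<lambda>c. \<Sum>v\<in>V. B c m v) \<le> (real M - 1) / K * (\<Sum>v\<in>V. pw v)"
    if m: "m \<in> {1..M}" for m
  proof -
    have "measure_pmf.expectation ?Pi (\<lambda>c. \<Sum>v\<in>V. B c m v) =
       (\<Sum>v\<in>V. \<Sum>k\<in>{1..M} - {m}. measure_pmf.expectation ?Pi (\<lambda>c. if K * pw v < w (c k) v then w (c m) v else 0))"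
      unfolding B_def
      by (subst Bochner_Integration.integral_sum[OF intPi], intro sum.cong refl,
          subst Bochner_Integration.integral_sum[OF intPi], rule refl)
    also have "\<dots> \<le> (\<Sum>v\<in>V. \<Sum>k\<in>{1..M} - {m}. pw v / K)"
      using m by (intro sum_mono EB1) auto
    also have "\<dots> = (\<Sum>v\<in>V. (real M - 1) * (pw v / K))"
      using m by (simp add: card_Diff_singleton of_nat_diff)
    also have "\<dots> = (real M - 1) / K * (\<Sum>v\<in>V. pw v)"
      by (simp add: sum_distrib_left)
    finally show ?thesis .
  qed
  have "measure_pmf.expectation ?Pi (\<lambda>c. \<Sum>m\<in>{1..M}. \<Sum>v\<in>V. if dec c v \<noteq> m then w (c m) v else 0)
      \<le> measure_pmf.expectation ?Pi (\<lambda>c. \<Sum>m\<in>{1..M}. (\<Sum>v\<in>V. A (c m) v) + (\<Sum>v\<in>V. B c m v))"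
    by (intro integral_mono intPi sum_mono) (auto simp: sum.distrib[symmetric] intro!: sum_mono pt)
  also have "\<dots> = (\<Sum>m\<in>{1..M}. measure_pmf.expectation ?Pi (\<lambda>c. \<Sum>v\<in>V. A (c m) v)
                      + measure_pmf.expectation ?Pi (\<lambda>c. \<Sum>v\<in>V. B c m v))"
    by (subst Bochner_Integration.integral_sum[OF intPi], intro sum.cong refl,
        rule Bochner_Integration.integral_add[OF intPi intPi])
  also have "\<dots> \<le> (\<Sum>m\<in>{1..M}. \<gamma> + (real M - 1) / K * (\<Sum>v\<in>V. pw v))"
  proof (intro sum_mono add_mono)
    fix m assume m: "m \<in> {1..M}"
    show "measure_pmf.expectation ?Pi (\<lambda>c. \<Sum>v\<in>V. A (c m) v) \<le> \<gamma>" using EA[OF m] by simp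
    show "measure_pmf.expectation ?Pi (\<lambda>c. \<Sum>v\<in>V. B c m v) \<le> (real M - 1) / K * (\<Sum>v\<in>V. pw v)"
      by (rule EB[OF m])
  qed
  also have "\<dots> = real M * \<gamma> + real M * (real M - 1) / K * (\<Sum>v\<in>V. pw v)"
    by (simp add: algebra_simps)
  finally show ?thesis .
qed

lemma greedy_family:
  assumes "finite U" "\<And>x. x \<in> U \<Longrightarrow> R x x" "\<And>x y. R x y \<Longrightarrow> R y x"
  shows "\<exists>F\<subseteq>U. (\<forall>f\<in>F. \<forall>g\<in>F. f \<noteq> g \<longrightarrow> \<not> R f g) \<and> (\<forall>g\<in>U. \<exists>f\<in>F. R f g)"
  using assms
proof (induction U rule: finite_induct)
  case empty then show ?case by auto
next
  case (insert x U)
  then obtain F where F: "F \<subseteq> U" "\<forall>f\<in>F. \<forall>g\<in>F. f \<noteq> g \<longrightarrow> \<not> R f g" "\<forall>g\<in>U. \<exists>f\<in>F. R f g"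
    by auto
  show ?case
  proof (cases "\<exists>f\<in>F. R f x")
    case True then show ?thesis using F by (intro exI[of _ F]) auto
  next
    case False
    show ?thesis
    proof (intro exI[of _ "insert x F"] conjI)
      show "insert x F \<subseteq> insert x U" using F by auto
      show "\<forall>f\<in>insert x F. \<forall>g\<in>insert x F. f \<noteq> g \<longrightarrow> \<not> R f g"
        using F False insert.prems(2) by blast
      show "\<forall>g\<in>insert x U. \<exists>f\<in>insert x F. R f g"
        using F insert.prems(1) by auto
    qed
  qed
qed

definition agree :: "nat \<Rightarrow> (nat \<Rightarrow> nat) \<Rightarrow> (nat \<Rightarrow> nat) \<Rightarrow> nat" where
  "agree K f g = card {k\<in>{..<K}. f k = g k}"

lemma card_fix_on:
  assumes f: "f \<in> PiE {..<K} (\<lambda>_. {..<q})" and T: "T \<subseteq> {..<K}"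
  shows "card {g\<in>PiE {..<K} (\<lambda>_. {..<q}). \<forall>k\<in>T. g k = f k} = q ^ (K - card T)"
proof -
  have "{g\<in>PiE {..<K} (\<lambda>_. {..<q}). \<forall>k\<in>T. g k = f k} = PiE {..<K} (\<lambda>k. if k \<in> T then {f k} else {..<q})"
    using f T by (auto simp: PiE_def Pi_def split: if_splits)
  also have "card \<dots> = (\<Prod>k\<in>{..<K}. if k \<in> T then 1 else q)"
    by (simp add: card_PiE if_distrib cong: if_cong)
  also have "\<dots> = q ^ card ({..<K} - T)"
    by (simp add: prod.If_cases Int_absorb1[OF T] Diff_eq[symmetric])
  also have "card ({..<K} - T) = K - card T"
    using T by (simp add: card_Diff_subset finite_subset)
  finally show ?thesis .
qed

lemma card_close:
  assumes f: "f \<in> PiE {..<K} (\<lambda>_. {..<q})"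
  shows "card {g\<in>PiE {..<K} (\<lambda>_. {..<q}). t \<le> agree K f g} \<le> 2 ^ K * q ^ (K - t)"
proof -
  let ?U = "PiE {..<K} (\<lambda>_. {..<q})"
  let ?Ts = "{T. T \<subseteq> {..<K} \<and> card T = t}"
  have sub: "{g\<in>?U. t \<le> agree K f g} \<subseteq> (\<Union>T\<in>?Ts. {g\<in>?U. \<forall>k\<in>T. g k = f k})"
  proof
    fix g assume g: "g \<in> {g\<in>?U. t \<le> agree K f g}"
    then obtain T where T: "T \<subseteq> {k\<in>{..<K}. f k = g k}" "card T = t"
      by (auto simp: agree_def elim: obtain_subset_with_card_n)
    then have "T \<in> ?Ts" "g \<in> {g\<in>?U. \<forall>k\<in>T. g k = f k}" using g by auto
    then show "g \<in> (\<Union>T\<in>?Ts. {g\<in>?U. \<forall>k\<in>T. g k = f k})" by blast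
  qed
  have finTs: "finite ?Ts" by (rule finite_subset[of _ "Pow {..<K}"]) auto
  have "card {g\<in>?U. t \<le> agree K f g} \<le> card (\<Union>T\<in>?Ts. {g\<in>?U. \<forall>k\<in>T. g k = f k})"
    by (intro card_mono sub) (auto intro!: finite_UN_I finTs finite_PiE)
  also have "\<dots> \<le> (\<Sum>T\<in>?Ts. card {g\<in>?U. \<forall>k\<in>T. g k = f k})"
    by (rule card_UN_le[OF finTs])
  also have "\<dots> = (\<Sum>T\<in>?Ts. q ^ (K - t))"
    by (intro sum.cong refl) (auto simp: card_fix_on[OF f])
  also have "\<dots> = (K choose t) * q ^ (K - t)"
    using n_subsets[of "{..<K}" t] by simp
  also have "\<dots> \<le> 2 ^ K * q ^ (K - t)"
    by (intro mult_right_mono binomial_le_pow2) auto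
  finally show ?thesis .
qed

lemma gv_family:
  fixes K q t :: nat
  assumes "t \<le> K"
  shows "\<exists>F \<subseteq> PiE {..<K} (\<lambda>_. {..<q}).
           (\<forall>f\<in>F. \<forall>g\<in>F. f \<noteq> g \<longrightarrow> agree K f g < t) \<and>
           q ^ K \<le> card F * (2 ^ K * q ^ (K - t))"
proof -
  let ?U = "PiE {..<K} (\<lambda>_. {..<q})"
  have finU: "finite ?U" by (intro finite_PiE) auto
  have refl: "t \<le> agree K x x" for x using assms by (simp add: agree_def)
  have sym: "t \<le> agree K x y \<Longrightarrow> t \<le> agree K y x" for x y by (simp add: agree_def eq_commute)
  obtain F where F: "F \<subseteq> ?U" "\<forall>f\<in>F. \<forall>g\<in>F. f \<noteq> g \<longrightarrow> \<not> t \<le> agree K f g"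
      "\<forall>g\<in>?U. \<exists>f\<in>F. t \<le> agree K f g"
    using greedy_family[OF finU, of "\<lambda>f g. t \<le> agree K f g"] refl sym by blast
  have finF: "finite F" using F(1) finU finite_subset by blast
  have "q ^ K = card ?U" by (simp add: card_PiE)
  also have "\<dots> \<le> card (\<Union>f\<in>F. {g\<in>?U. t \<le> agree K f g})"
    using F(3) by (intro card_mono finite_UN_I finF) (auto intro: finite_subset[OF _ finU])
  also have "\<dots> \<le> (\<Sum>f\<in>F. card {g\<in>?U. t \<le> agree K f g})" by (rule card_UN_le[OF finF])
  also have "\<dots> \<le> (\<Sum>f\<in>F. 2 ^ K * q ^ (K - t))"
    using F(1) by (intro sum_mono card_close) auto
  also have "\<dots> = card F * (2 ^ K * q ^ (K - t))" by simp
  finally have cb: "q ^ K \<le> card F * (2 ^ K * q ^ (K - t))" .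
  have "\<forall>f\<in>F. \<forall>g\<in>F. f \<noteq> g \<longrightarrow> agree K f g < t" using F(2) by (meson not_le)
  then show ?thesis using F(1) cb by blast
qed

definition sigv :: "nat \<Rightarrow> (nat \<Rightarrow> 'b set) \<Rightarrow> 'b \<Rightarrow> (nat \<Rightarrow> bool)" where
  "sigv N D y = restrict (\<lambda>i. y \<in> D i) {1..N}"

definition Vset :: "nat \<Rightarrow> (nat \<Rightarrow> bool) set" where
  "Vset N = PiE {1..N} (\<lambda>_. UNIV)"

lemma finite_Vset: "finite (Vset N)"
  unfolding Vset_def by (intro finite_PiE) auto

lemma sigv_in_Vset: "sigv N D y \<in> Vset N"
  by (simp add: sigv_def Vset_def)

lemma atom_sets:
  assumes D: "\<And>i. i \<in> {1..N} \<Longrightarrow> D i \<in> sets Yn"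
  shows "sigv N D -` {v} \<inter> space Yn \<in> sets Yn"
proof -
  have eq: "sigv N D -` {v} \<inter> space Yn =
     (if v \<in> Vset N then {y\<in>space Yn. \<forall>i\<in>{1..N}. (y \<in> D i) = v i} else {})"
    using sigv_in_Vset[of N D]
    by (auto simp: sigv_def Vset_def PiE_def extensional_def fun_eq_iff)
  have "{y\<in>space Yn. \<forall>i\<in>{1..N}. (y \<in> D i) = v i} \<in> sets Yn"
  proof (rule sets.sets_Collect_finite_All)
    fix i assume i: "i \<in> {1..N}"
    show "{y\<in>space Yn. (y \<in> D i) = v i} \<in> sets Yn"
    proof (cases "v i")
      case True
      then have "{y\<in>space Yn. (y \<in> D i) = v i} = D i \<inter> space Yn" by auto
      then show ?thesis using D[OF i] by auto
    next
      case False
      then have "{y\<in>space Yn. (y \<in> D i) = v i} = space Yn - D i" by auto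
      then show ?thesis using D[OF i] by auto
    qed
  qed simp
  then show ?thesis using eq by simp
qed

lemma preimage_sets:
  assumes D: "\<And>i. i \<in> {1..N} \<Longrightarrow> D i \<in> sets Yn"
  shows "sigv N D -` G \<inter> space Yn \<in> sets Yn"
proof -
  have "sigv N D -` G \<inter> space Yn = (\<Union>v\<in>G \<inter> Vset N. sigv N D -` {v} \<inter> space Yn)"
    using sigv_in_Vset[of N D] by auto
  also have "\<dots> \<in> sets Yn"
    using atom_sets[where N=N and D=D and Yn=Yn, OF D] finite_Vset by (intro sets.finite_UN) auto
  finally show ?thesis .
qed

lemma measure_preimage:
  assumes D: "\<And>i. i \<in> {1..N} \<Longrightarrow> D i \<in> sets Yn"
    and P: "prob_space Wx" and S: "sets Wx = sets Yn"
  shows "measure Wx (sigv N D -` G \<inter> space Yn) = (\<Sum>v\<in>G \<inter> Vset N. measure Wx (sigv N D -` {v} \<inter> space Yn))"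
proof -
  interpret prob_space Wx by fact
  have "sigv N D -` G \<inter> space Yn = (\<Union>v\<in>G \<inter> Vset N. sigv N D -` {v} \<inter> space Yn)"
    using sigv_in_Vset[of N D] by auto
  also have "measure Wx \<dots> = (\<Sum>v\<in>G \<inter> Vset N. measure Wx (sigv N D -` {v} \<inter> space Yn))"
    using atom_sets[where N=N and D=D and Yn=Yn, OF D] finite_Vset S
    by (intro finite_measure_finite_Union) (auto simp: disjoint_family_on_def)
  finally show ?thesis .
qed

lemma D_as_preimage:
  assumes "i \<in> {1..N}"
  shows "D i \<inter> space Yn = sigv N D -` {v. v i} \<inter> space Yn"
    and "space Yn - D i = sigv N D -` {v. \<not> v i} \<inter> space Yn"
  using assms by (auto simp: sigv_def)

lemma measure_D:
  assumes D: "\<And>i. i \<in> {1..N} \<Longrightarrow> D i \<in> sets Yn" and i: "i \<in> {1..N}"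
    and P: "prob_space Wx" and S: "sets Wx = sets Yn"
  shows "measure Wx (D i) = (\<Sum>v\<in>{v. v i} \<inter> Vset N. measure Wx (sigv N D -` {v} \<inter> space Yn))"
    and "measure Wx (space Yn - D i) = (\<Sum>v\<in>{v. \<not> v i} \<inter> Vset N. measure Wx (sigv N D -` {v} \<inter> space Yn))"
proof -
  have sp: "space Wx = space Yn" using S by (rule sets_eq_imp_space_eq)
  have sub: "D i \<subseteq> space Yn" using D[OF i] sets.sets_into_space by blast
  have e1: "D i = sigv N D -` {v. v i} \<inter> space Yn"
    using D_as_preimage(1)[OF i, of D Yn] sub by blast
  have e2: "space Yn - D i = sigv N D -` {v. \<not> v i} \<inter> space Yn"
    using D_as_preimage(2)[OF i, of Yn D] by blast
  show "measure Wx (D i) = (\<Sum>v\<in>{v. v i} \<inter> Vset N. measure Wx (sigv N D -` {v} \<inter> space Yn))"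
    by (subst e1) (rule measure_preimage[where N=N and D=D and Yn=Yn, OF D P S])
  show "measure Wx (space Yn - D i) = (\<Sum>v\<in>{v. \<not> v i} \<inter> Vset N. measure Wx (sigv N D -` {v} \<inter> space Yn))"
    by (subst e2) (rule measure_preimage[where N=N and D=D and Yn=Yn, OF D P S])
qed

lemma sum_atoms:
  assumes D: "\<And>i. i \<in> {1..N} \<Longrightarrow> D i \<in> sets Yn"
    and P: "prob_space Wx" and S: "sets Wx = sets Yn"
  shows "(\<Sum>v\<in>Vset N. measure Wx (sigv N D -` {v} \<inter> space Yn)) = 1"
proof -
  have sp: "space Wx = space Yn" using S by (rule sets_eq_imp_space_eq)
  have "(\<Sum>v\<in>Vset N. measure Wx (sigv N D -` {v} \<inter> space Yn)) = measure Wx (sigv N D -` UNIV \<inter> space Yn)"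
    using measure_preimage[where N=N and D=D and Yn=Yn and G=UNIV, OF D P S] by simp
  also have "\<dots> = 1" using P sp by (metis Int_UNIV_left prob_space.prob_space vimage_UNIV)
  finally show ?thesis .
qed

lemma decoder_measurable:
  fixes M :: nat
  assumes D: "\<And>i. i \<in> {1..N} \<Longrightarrow> D i \<in> sets Yn"
    and g: "\<And>v. v \<in> Vset N \<Longrightarrow> g v \<in> {1..M}"
  shows "(\<lambda>y. g (sigv N D y)) \<in> measurable Yn (count_space {1..M})"
proof -
  have A: "(\<lambda>y. g (sigv N D y)) \<in> space Yn \<rightarrow> {1..M}" using g[OF sigv_in_Vset] by (intro Pi_I)
  have B: "\<forall>a\<in>{1..M}. (\<lambda>y. g (sigv N D y)) -` {a} \<inter> space Yn \<in> sets Yn"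
  proof
    fix a
    have "(\<lambda>y. g (sigv N D y)) -` {a} \<inter> space Yn = sigv N D -` {v. g v = a} \<inter> space Yn" by auto
    then show "(\<lambda>y. g (sigv N D y)) -` {a} \<inter> space Yn \<in> sets Yn"
      using preimage_sets[where N=N and D=D and Yn=Yn and G="{v. g v = a}", OF D] by simp
  qed
  show ?thesis using A B by (subst measurable_count_space_eq2) auto
qed

lemma decoder_error:
  assumes D: "\<And>i. i \<in> {1..N} \<Longrightarrow> D i \<in> sets Yn"
    and P: "prob_space Wx" and S: "sets Wx = sets Yn"
  shows "measure Wx (space Yn - (\<lambda>y. g (sigv N D y)) -` {a}) =
         (\<Sum>v\<in>Vset N. if g v \<noteq> a then measure Wx (sigv N D -` {v} \<inter> space Yn) else 0)"
proof -
  have "space Yn - (\<lambda>y. g (sigv N D y)) -` {a} = sigv N D -` {v. g v \<noteq> a} \<inter> space Yn" by auto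
  then have "measure Wx (space Yn - (\<lambda>y. g (sigv N D y)) -` {a}) =
      (\<Sum>v\<in>{v. g v \<noteq> a} \<inter> Vset N. measure Wx (sigv N D -` {v} \<inter> space Yn))"
    using measure_preimage[where N=N and D=D and Yn=Yn and G="{v. g v \<noteq> a}", OF D P S] by simp
  also have "\<dots> = (\<Sum>v\<in>Vset N. if g v \<noteq> a then measure Wx (sigv N D -` {v} \<inter> space Yn) else 0)"
    using finite_Vset by (simp add: sum.If_cases Int_commute)
  finally show ?thesis .
qed

definition wch :: "(nat \<Rightarrow> 'a list \<Rightarrow> 'b measure) \<Rightarrow> (nat \<Rightarrow> 'b measure) \<Rightarrow> nat \<Rightarrow> nat \<Rightarrow> (nat \<Rightarrow> 'b set)
   \<Rightarrow> 'a list \<Rightarrow> (nat \<Rightarrow> bool) \<Rightarrow> real" where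
  "wch W Y n N D x v = measure (W n x) (sigv N D -` {v} \<inter> space (Y n))"

definition pwch where
  "pwch W Y n N D P v = measure_pmf.expectation P (\<lambda>x. wch W Y n N D x v)"

definition betach where
  "betach W Y n N D K P = measure_pmf.expectation P (\<lambda>x. \<Sum>v\<in>Vset N.
      if K * pwch W Y n N D P v < wch W Y n N D x v then wch W Y n N D x v else 0)"

lemma finite_cost_set: "finite (cost_set c \<Gamma> n :: ('a::finite) list set)"
proof -
  have "cost_set c \<Gamma> n \<subseteq> {xs. set xs \<subseteq> UNIV \<and> length xs = n}" by (auto simp: cost_set_def)
  moreover have "finite {xs::'a list. set xs \<subseteq> UNIV \<and> length xs = n}"
    by (rule finite_lists_length_eq) simp
  ultimately show ?thesis by (rule finite_subset)
qed

lemma exp_cong_pmf: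
  fixes f g :: "'x \<Rightarrow> real"
  assumes "\<And>x. x \<in> set_pmf P \<Longrightarrow> f x = g x"
  shows "measure_pmf.expectation P f = measure_pmf.expectation P g"
  using assms by (intro integral_cong_AE) (auto simp: AE_measure_pmf_iff)

lemma wch_nonneg: "wch W Y n N D x v \<ge> 0" by (simp add: wch_def)

lemma gc_prob: "general_channel W Y \<Longrightarrow> length x = n \<Longrightarrow> prob_space (W n x)"
  and gc_sets: "general_channel W Y \<Longrightarrow> length x = n \<Longrightarrow> sets (W n x) = sets (Y n)"
  by (auto simp: general_channel_def)

lemma sum_wch:
  assumes gc: "general_channel W Y" and D: "\<And>i. i \<in> {1..N} \<Longrightarrow> D i \<in> sets (Y n)" and x: "length x = n"
  shows "(\<Sum>v\<in>Vset N. wch W Y n N D x v) = 1"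
  unfolding wch_def by (rule sum_atoms[OF D gc_prob[OF gc x] gc_sets[OF gc x]])

lemma cost_len: "x \<in> cost_set c \<Gamma> n \<Longrightarrow> length x = n"
  by (simp add: cost_set_def)

lemma sum_pwch:
  fixes W :: "nat \<Rightarrow> ('a::finite) list \<Rightarrow> 'b measure"
  assumes gc: "general_channel W Y" and D: "\<And>i. i \<in> {1..N} \<Longrightarrow> D i \<in> sets (Y n)"
    and P: "set_pmf P \<subseteq> cost_set c \<Gamma> (n::nat)"
  shows "(\<Sum>v\<in>Vset N. pwch W Y n N D P v) = 1"
proof -
  have finP: "finite (set_pmf P)" using P finite_cost_set finite_subset by metis
  have "(\<Sum>v\<in>Vset N. pwch W Y n N D P v) = measure_pmf.expectation P (\<lambda>x. \<Sum>v\<in>Vset N. wch W Y n N D x v)"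
    unfolding pwch_def
    by (rule Bochner_Integration.integral_sum[symmetric]) (rule integrable_measure_pmf_finite[OF finP])
  also have "\<dots> = measure_pmf.expectation P (\<lambda>x. 1)"
    using P by (intro exp_cong_pmf sum_wch[OF gc D]) (auto intro: cost_len)
  also have "\<dots> = 1" by simp
  finally show ?thesis .
qed

lemma gamma_eq:
  fixes W :: "nat \<Rightarrow> ('a::finite) list \<Rightarrow> 'b measure"
  assumes gc: "general_channel W Y" and D: "\<And>i. i \<in> {1..N} \<Longrightarrow> D i \<in> sets (Y n)"
    and P: "set_pmf P \<subseteq> cost_set c \<Gamma> (n::nat)"
  shows "measure_pmf.expectation P (\<lambda>x. \<Sum>v\<in>Vset N.
      if wch W Y n N D x v \<le> K * pwch W Y n N D P v then wch W Y n N D x v else 0)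
    = 1 - betach W Y n N D K P"
proof -
  let ?w = "wch W Y n N D" and ?pw = "pwch W Y n N D P"
  have finP: "finite (set_pmf P)" using P finite_cost_set finite_subset by metis
  have "measure_pmf.expectation P (\<lambda>x. \<Sum>v\<in>Vset N. if ?w x v \<le> K * ?pw v then ?w x v else 0)
      = measure_pmf.expectation P (\<lambda>x. 1 - (\<Sum>v\<in>Vset N. if K * ?pw v < ?w x v then ?w x v else 0))"
  proof (rule exp_cong_pmf)
    fix x assume x: "x \<in> set_pmf P"
    have "(\<Sum>v\<in>Vset N. if ?w x v \<le> K * ?pw v then ?w x v else 0) + (\<Sum>v\<in>Vset N. if K * ?pw v < ?w x v then ?w x v else 0)
        = (\<Sum>v\<in>Vset N. ?w x v)"
      by (subst sum.distrib[symmetric]) (intro sum.cong refl, auto)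
    also have "\<dots> = 1" using x P by (intro sum_wch[OF gc D]) (auto intro: cost_len)
    finally show "(\<Sum>v\<in>Vset N. if ?w x v \<le> K * ?pw v then ?w x v else 0) = 1 - (\<Sum>v\<in>Vset N. if K * ?pw v < ?w x v then ?w x v else 0)"
      by linarith
  qed
  also have "\<dots> = 1 - betach W Y n N D K P"
    unfolding betach_def using finP
    by (subst Bochner_Integration.integral_diff) (auto intro: integrable_measure_pmf_finite)
  finally show ?thesis .
qed

lemma set_Pi_pmf_comp:
  assumes "finite A" "c \<in> set_pmf (Pi_pmf A d (\<lambda>_. P))" "m \<in> A"
  shows "c m \<in> set_pmf P"
  using assms set_Pi_pmf[of A d "\<lambda>_. P"] by (auto simp: PiE_dflt_def)

lemma feinstein_code:
  fixes W :: "nat \<Rightarrow> ('a::finite) list \<Rightarrow> 'b measure"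
  assumes gc: "general_channel W Y" and D: "\<And>i. i \<in> {1..N} \<Longrightarrow> D i \<in> sets (Y n)"
    and P: "set_pmf P \<subseteq> cost_set c \<Gamma> n" and K: "K > 0" and M: "M \<ge> 1"
    and beta: "\<alpha> \<le> betach W Y n N D K P"
  shows "\<exists>\<phi> \<psi> \<epsilon>. tcode W Y c \<Gamma> n M \<phi> \<psi> \<epsilon> \<and> \<epsilon> \<le> 1 - \<alpha> + real M / K"
proof -
  let ?w = "wch W Y n N D" and ?pw = "pwch W Y n N D P"
  have finP: "finite (set_pmf P)" using P finite_cost_set finite_subset by metis
  define dec where "dec = (\<lambda>c v. (if \<exists>k\<in>{1..M}. K * ?pw v < ?w (c k) v
                  then LEAST k. k \<in> {1..M} \<and> K * ?pw v < ?w (c k) v else 1))"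
  let ?Pi = "Pi_pmf {1..M} undefined (\<lambda>_. P)"
  let ?F = "\<lambda>c. \<Sum>m\<in>{1..M}. \<Sum>v\<in>Vset N. if dec c v \<noteq> m then ?w (c m) v else 0"
  have E0: "measure_pmf.expectation ?Pi ?F \<le> real M * measure_pmf.expectation P (\<lambda>x. \<Sum>v\<in>Vset N.
      if ?w x v \<le> K * ?pw v then ?w x v else 0) + real M * (real M - 1) / K * (\<Sum>v\<in>Vset N. ?pw v)"
    using feinstein[where P=P and w="wch W Y n N D" and V="Vset N" and M=M and K=K and d=undefined,
        OF finP finite_Vset wch_nonneg K]
    unfolding dec_def pwch_def[symmetric] .
  have E: "measure_pmf.expectation ?Pi ?F \<le> real M * (1 - betach W Y n N D K P) + real M * (real M - 1) / K * 1"
    using E0 by (simp only: gamma_eq[OF gc D P] sum_pwch[OF gc D P])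
  obtain cb where cb: "cb \<in> set_pmf ?Pi" "?F cb \<le> measure_pmf.expectation ?Pi ?F"
    using exists_le_expectation[OF finite_set_Pi_pmf[of "{1..M}" "\<lambda>_. P" undefined], of ?F] finP by blast
  have cbP: "cb m \<in> set_pmf P" if "m \<in> {1..M}" for m
    using set_Pi_pmf_comp[OF _ cb(1) that] by simp
  have cblen: "length (cb m) = n" if "m \<in> {1..M}" for m using cbP[OF that] P cost_len by blast
  have decin: "dec cb v \<in> {1..M}" for v
  proof (cases "\<exists>k\<in>{1..M}. K * ?pw v < ?w (cb k) v")
    case True
    then have "(LEAST k. k \<in> {1..M} \<and> K * ?pw v < ?w (cb k) v) \<in> {1..M}"
      by (metis (mono_tags, lifting) LeastI)
    then show ?thesis using True by (simp add: dec_def)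
  qed (use M in \<open>auto simp: dec_def\<close>)
  define \<psi> where "\<psi> = (\<lambda>y. dec cb (sigv N D y))"
  define \<epsilon> where "\<epsilon> = (\<Sum>i=1..M. measure (W n (cb i)) (space (Y n) - \<psi> -` {i})) / real M"
  have tc: "tcode W Y c \<Gamma> n M cb \<psi> \<epsilon>"
    unfolding tcode_def
  proof (intro conjI ballI)
    show "1 \<le> M" by fact
    show "cb i \<in> cost_set c \<Gamma> n" if "i \<in> {1..M}" for i using cbP[OF that] P by auto
    show "\<psi> \<in> Y n \<rightarrow>\<^sub>M count_space {1..M}"
      unfolding \<psi>_def by (rule decoder_measurable[OF D decin])
  qed (simp add: \<epsilon>_def)
  have "\<epsilon> = ?F cb / real M"
    unfolding \<epsilon>_def \<psi>_def wch_def
    by (intro arg_cong2[where f="(/)"] sum.cong refl decoder_error[OF D gc_prob[OF gc] gc_sets[OF gc]] cblen)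
  also have "\<dots> \<le> (real M * (1 - betach W Y n N D K P) + real M * (real M - 1) / K * 1) / real M"
    using cb(2) E M by (intro divide_right_mono) auto
  also have "\<dots> = 1 - betach W Y n N D K P + (real M - 1) / K" using M by (simp add: field_simps)
  also have "\<dots> \<le> 1 - \<alpha> + real M / K"
  proof -
    have "(real M - 1) / K \<le> real M / K" using K by (intro divide_right_mono) auto
    then show ?thesis using beta by linarith
  qed
  finally show ?thesis using tc by blast
qed

lemma soft_code:
  fixes W :: "nat \<Rightarrow> ('a::finite) list \<Rightarrow> 'b measure"
  assumes gc: "general_channel W Y" and D: "\<And>i. i \<in> {1..N} \<Longrightarrow> D i \<in> sets (Y n)"
    and P: "set_pmf P \<subseteq> cost_set c \<Gamma> n" and K: "K > 0" and Ms: "Ms > 0"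
    and beta: "betach W Y n N D K P \<le> \<alpha>"
  shows "\<exists>cb. cb \<in> PiE_dflt {..<Ms} undefined (\<lambda>_. {xs. length xs = n}) \<and>
     (\<Sum>v\<in>Vset N. \<bar>(\<Sum>m<Ms. wch W Y n N D (cb m) v) / real Ms - pwch W Y n N D P v\<bar>)
        \<le> 2 * \<alpha> + sqrt (K / real Ms)"
proof -
  have finP: "finite (set_pmf P)" using P finite_cost_set finite_subset by metis
  let ?Pi = "Pi_pmf {..<Ms} undefined (\<lambda>_. P)"
  let ?F = "\<lambda>cb. \<Sum>v\<in>Vset N. \<bar>(\<Sum>m<Ms. wch W Y n N D (cb m) v) / real Ms - pwch W Y n N D P v\<bar>"
  have E0: "measure_pmf.expectation ?Pi ?F \<le> 2 * betach W Y n N D K P + sqrt (K / real Ms) * (\<Sum>v\<in>Vset N. pwch W Y n N D P v)"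
    using soft_covering[where P=P and w="wch W Y n N D" and V="Vset N" and M=Ms and K=K and d=undefined,
        OF finP finite_Vset wch_nonneg Ms K]
    unfolding pwch_def[symmetric] betach_def[symmetric] .
  have E: "measure_pmf.expectation ?Pi ?F \<le> 2 * \<alpha> + sqrt (K / real Ms)"
  proof -
    have s: "sum (pwch W Y n N D P) (Vset N) = 1"
      using sum_pwch[where W=W and Y=Y and N=N and D=D and n=n, OF gc D P] by simp
    show ?thesis using E0 beta unfolding s by linarith
  qed
  obtain cb where cb: "cb \<in> set_pmf ?Pi" "?F cb \<le> measure_pmf.expectation ?Pi ?F"
    using exists_le_expectation[OF finite_set_Pi_pmf[of "{..<Ms}" "\<lambda>_. P" undefined], of ?F] finP by blast
  have "cb \<in> PiE_dflt {..<Ms} undefined (\<lambda>_. {xs. length xs = n})"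
    using cb(1) set_Pi_pmf[of "{..<Ms}" undefined "\<lambda>_. P"] P
    by (auto simp: PiE_dflt_def dest!: cost_len)
  then show ?thesis using cb(2) E by (intro exI[of _ cb]) auto
qed

lemma outprob_D:
  fixes W :: "nat \<Rightarrow> ('a::finite) list \<Rightarrow> 'b measure"
  assumes gc: "general_channel W Y" and D: "\<And>i. i \<in> {1..N} \<Longrightarrow> D i \<in> sets (Y n)"
    and P: "set_pmf P \<subseteq> cost_set c \<Gamma> n" and i: "i \<in> {1..N}"
  shows "outprob W n P (D i) = (\<Sum>v\<in>{v. v i} \<inter> Vset N. pwch W Y n N D P v)"
    and "outprob W n P (space (Y n) - D i) = (\<Sum>v\<in>{v. \<not> v i} \<inter> Vset N. pwch W Y n N D P v)"
proof -
  have finP: "finite (set_pmf P)" using P finite_cost_set finite_subset by metis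
  have "outprob W n P (D i) = measure_pmf.expectation P (\<lambda>x. \<Sum>v\<in>{v. v i} \<inter> Vset N. wch W Y n N D x v)"
    unfolding outprob_def wch_def
    using P by (intro exp_cong_pmf measure_D(1)[OF D i gc_prob[OF gc] gc_sets[OF gc]]) (auto dest: cost_len)
  also have "\<dots> = (\<Sum>v\<in>{v. v i} \<inter> Vset N. pwch W Y n N D P v)"
    unfolding pwch_def by (rule Bochner_Integration.integral_sum) (rule integrable_measure_pmf_finite[OF finP])
  finally show "outprob W n P (D i) = (\<Sum>v\<in>{v. v i} \<inter> Vset N. pwch W Y n N D P v)" .
  have "outprob W n P (space (Y n) - D i) = measure_pmf.expectation P (\<lambda>x. \<Sum>v\<in>{v. \<not> v i} \<inter> Vset N. wch W Y n N D x v)"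
    unfolding outprob_def wch_def
    using P by (intro exp_cong_pmf measure_D(2)[OF D i gc_prob[OF gc] gc_sets[OF gc]]) (auto dest: cost_len)
  also have "\<dots> = (\<Sum>v\<in>{v. \<not> v i} \<inter> Vset N. pwch W Y n N D P v)"
    unfolding pwch_def by (rule Bochner_Integration.integral_sum) (rule integrable_measure_pmf_finite[OF finP])
  finally show "outprob W n P (space (Y n) - D i) = (\<Sum>v\<in>{v. \<not> v i} \<inter> Vset N. pwch W Y n N D P v)" .
qed

lemma sum_split_vi:
  fixes f :: "(nat \<Rightarrow> bool) \<Rightarrow> real"
  shows "(\<Sum>v\<in>{v. v i} \<inter> Vset N. f v) + (\<Sum>v\<in>{v. \<not> v i} \<inter> Vset N. f v) = (\<Sum>v\<in>Vset N. f v)"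
proof -
  have "(\<Sum>v\<in>Vset N. f v) = (\<Sum>v\<in>{v. v i} \<inter> Vset N \<union> {v. \<not> v i} \<inter> Vset N. f v)"
    by (intro sum.cong) auto
  also have "\<dots> = (\<Sum>v\<in>{v. v i} \<inter> Vset N. f v) + (\<Sum>v\<in>{v. \<not> v i} \<inter> Vset N. f v)"
    using finite_Vset[of N] by (intro sum.union_disjoint) auto
  finally show ?thesis by simp
qed

lemma id_card_bound:
  fixes W :: "nat \<Rightarrow> ('a::finite) list \<Rightarrow> 'b measure"
  assumes gc: "general_channel W Y" and ic: "idcode W Y c \<Gamma> n N Q D mu_n lam_n"
    and K: "K > 0" and Ms: "Ms > 0"
    and nonbad: "\<And>i. i \<in> {1..N} \<Longrightarrow> betach W Y n N D K (Q i) \<le> \<alpha>"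
    and mu: "mu_n \<le> ereal a" and lam: "lam_n \<le> ereal b"
    and small: "2 * (2 * \<alpha> + sqrt (K / real Ms)) < 1 - a - b"
  shows "N \<le> (CARD('a) ^ n) ^ Ms"
proof -
  let ?\<eta> = "2 * \<alpha> + sqrt (K / real Ms)"
  have D: "\<And>i. i \<in> {1..N} \<Longrightarrow> D i \<in> sets (Y n)" using ic by (auto simp: idcode_def)
  have Q: "\<And>i. i \<in> {1..N} \<Longrightarrow> set_pmf (Q i) \<subseteq> cost_set c \<Gamma> n" using ic by (auto simp: idcode_def)
  let ?T = "PiE_dflt {..<Ms} undefined (\<lambda>_. {xs::'a list. length xs = n})"
  let ?prop = "\<lambda>i cb. cb \<in> ?T \<and>
     (\<Sum>v\<in>Vset N. \<bar>(\<Sum>m<Ms. wch W Y n N D (cb m) v) / real Ms - pwch W Y n N D (Q i) v\<bar>) \<le> ?\<eta>"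
  have ex: "\<exists>cb. ?prop i cb" if "i \<in> {1..N}" for i
    by (rule soft_code[where W=W and Y=Y and N=N and D=D and n=n, OF gc D Q[OF that] K Ms nonbad[OF that]])
  define cbf where "cbf = (\<lambda>i. SOME cb. ?prop i cb)"
  have cbf: "?prop i (cbf i)" if "i \<in> {1..N}" for i
    unfolding cbf_def using someI_ex[OF ex[OF that]] .
  have mu_i: "outprob W n (Q i) (space (Y n) - D i) \<le> a" if "i \<in> {1..N}" for i
  proof -
    have "ereal (outprob W n (Q i) (space (Y n) - D i)) \<le> mu_n"
      using ic that unfolding idcode_def by (auto intro: SUP_upper)
    then have "ereal (outprob W n (Q i) (space (Y n) - D i)) \<le> ereal a" using mu by (rule order_trans)
    then show ?thesis by simp
  qed
  have lam_ij: "outprob W n (Q j) (D i) \<le> b" if "i \<in> {1..N}" "j \<in> {1..N}" "i \<noteq> j" for i j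
  proof -
    let ?S = "{(i, j). i \<in> {1..N} \<and> j \<in> {1..N} \<and> i \<noteq> j}"
    let ?f = "\<lambda>ij. ereal (outprob W n (Q (snd ij)) (D (fst ij)))"
    have l: "lam_n = (SUP ij\<in>?S. ?f ij)" using ic by (simp add: idcode_def)
    have "(i,j) \<in> ?S" using that by auto
    then have "?f (i,j) \<le> lam_n" unfolding l by (rule SUP_upper)
    then have "ereal (outprob W n (Q j) (D i)) \<le> lam_n" by simp
    then have "ereal (outprob W n (Q j) (D i)) \<le> ereal b" using lam by (rule order_trans)
    then show ?thesis by simp
  qed
  have inj: "inj_on cbf {1..N}"
  proof (rule inj_onI, rule ccontr)
    fix i j assume i: "i \<in> {1..N}" and j: "j \<in> {1..N}" and eq: "cbf i = cbf j" and ne: "i \<noteq> j"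
    define A where "A = (\<lambda>v. (\<Sum>m<Ms. wch W Y n N D (cbf i m) v) / real Ms)"
    let ?pi = "pwch W Y n N D (Q i)" and ?pj = "pwch W Y n N D (Q j)"
    have ci: "(\<Sum>v\<in>Vset N. \<bar>A v - ?pi v\<bar>) \<le> ?\<eta>" using cbf[OF i] by (simp add: A_def)
    have cj: "(\<Sum>v\<in>Vset N. \<bar>A v - ?pj v\<bar>) \<le> ?\<eta>" using cbf[OF j] by (simp add: A_def eq)
    have "\<bar>(\<Sum>v\<in>{v. v i} \<inter> Vset N. ?pi v) - (\<Sum>v\<in>{v. v i} \<inter> Vset N. ?pj v)\<bar>
        \<le> (\<Sum>v\<in>{v. v i} \<inter> Vset N. \<bar>?pi v - ?pj v\<bar>)"
      by (subst sum_subtractf[symmetric]) (rule sum_abs)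
    also have "\<dots> \<le> (\<Sum>v\<in>Vset N. \<bar>?pi v - ?pj v\<bar>)"
      using finite_Vset[of N] by (intro sum_mono2) auto
    also have "\<dots> \<le> (\<Sum>v\<in>Vset N. \<bar>A v - ?pi v\<bar> + \<bar>A v - ?pj v\<bar>)"
      by (intro sum_mono) linarith
    also have "\<dots> \<le> 2 * ?\<eta>" using ci cj by (simp add: sum.distrib)
    finally have close: "\<bar>(\<Sum>v\<in>{v. v i} \<inter> Vset N. ?pi v) - (\<Sum>v\<in>{v. v i} \<inter> Vset N. ?pj v)\<bar> \<le> 2 * ?\<eta>" .
    have s1: "(\<Sum>v\<in>{v. v i} \<inter> Vset N. ?pi v) + (\<Sum>v\<in>{v. \<not> v i} \<inter> Vset N. ?pi v) = 1"
      using sum_split_vi[of ?pi i N] sum_pwch[where W=W and Y=Y and N=N and D=D and n=n, OF gc D Q[OF i]] by simp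
    have "(\<Sum>v\<in>{v. \<not> v i} \<inter> Vset N. ?pi v) \<le> a"
      using mu_i[OF i] outprob_D(2)[where W=W and Y=Y and N=N and D=D and n=n, OF gc D Q[OF i] i] by simp
    moreover have "(\<Sum>v\<in>{v. v i} \<inter> Vset N. ?pj v) \<le> b"
      using lam_ij[OF i j ne] outprob_D(1)[where W=W and Y=Y and N=N and D=D and n=n, OF gc D Q[OF j] i] by simp
    ultimately show False using close s1 small by linarith
  qed
  have "N = card (cbf ` {1..N})" using inj by (simp add: card_image)
  also have "\<dots> \<le> card ?T"
  proof (rule card_mono)
    have "?T = (\<lambda>h x. if x \<in> {..<Ms} then h x else undefined) ` PiE {..<Ms} (\<lambda>_. {xs::'a list. length xs = n})"
      by (rule dflt_image_PiE[symmetric])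
    moreover have "finite {xs::'a list. length xs = n}"
      using finite_lists_length_eq[of "UNIV::'a set" n] by simp
    ultimately show "finite ?T" by (auto intro!: finite_PiE)
    show "cbf ` {1..N} \<subseteq> ?T" using cbf by auto
  qed
  also have "\<dots> \<le> card (PiE {..<Ms} (\<lambda>_. {xs::'a list. length xs = n}))"
  proof -
    have "finite {xs::'a list. length xs = n}"
      using finite_lists_length_eq[of "UNIV::'a set" n] by simp
    then show ?thesis by (subst dflt_image_PiE[symmetric]) (rule card_image_le, auto intro!: finite_PiE)
  qed
  also have "\<dots> = (CARD('a) ^ n) ^ Ms"
    using card_lists_length_eq[of "UNIV::'a set" n] by (simp add: card_PiE)
  finally show ?thesis .
qed

lemma trivial_code:
  fixes W :: "nat \<Rightarrow> ('a::finite) list \<Rightarrow> 'b measure"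
  assumes x0: "x0 \<in> cost_set c \<Gamma> n" and M: "M \<ge> 1"
  shows "\<exists>\<phi> \<psi> \<epsilon>. tcode W Y c \<Gamma> n M \<phi> \<psi> \<epsilon>"
proof -
  have "tcode W Y c \<Gamma> n M (\<lambda>_. x0) (\<lambda>_. 1)
     ((\<Sum>i=1..M. measure (W n x0) (space (Y n) - (\<lambda>_. 1::nat) -` {i})) / real M)"
    unfolding tcode_def using x0 M by auto
  then show ?thesis by blast
qed

lemma Cs_nonneg:
  fixes W :: "nat \<Rightarrow> ('a::finite) list \<Rightarrow> 'b measure"
  assumes ne: "\<And>n. n \<ge> 1 \<Longrightarrow> cost_set c \<Gamma> n \<noteq> {}"
  shows "Cs W Y c \<Gamma> \<ge> 0"
proof -
  define x0 where "x0 = (\<lambda>n. SOME x. x \<in> cost_set c \<Gamma> n)"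
  have x0: "x0 n \<in> cost_set c \<Gamma> n" if "n \<ge> 1" for n
    unfolding x0_def using ne[OF that] by (simp add: some_in_eq)
  have tc: "tcode W Y c \<Gamma> n 1 (\<lambda>_. x0 n) (\<lambda>_. 1) 0" if "n \<ge> 1" for n
    unfolding tcode_def using x0[OF that] by auto
  have "(\<forall>n\<ge>1. tcode W Y c \<Gamma> n ((\<lambda>_. 1) n) ((\<lambda>n _. x0 n) n) ((\<lambda>_ _. 1) n) ((\<lambda>_. 0) n)) \<and>
        (\<lambda>_. 0::real) \<longlonglongrightarrow> 0 \<and>
        Liminf sequentially (\<lambda>n. ereal (ln (real ((\<lambda>_. 1::nat) n)) / real n)) \<ge> ereal 0"
    using tc by (auto simp: Liminf_const zero_ereal_def)
  then have "tc_achievable W Y c \<Gamma> 0"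
    unfolding tc_achievable_def
    by (intro exI[of _ "\<lambda>_. 1"] exI[of _ "\<lambda>n _. x0 n"] exI[of _ "\<lambda>_ _. 1"] exI[of _ "\<lambda>_. 0"]) simp
  then show ?thesis unfolding Cs_def by (auto intro!: Sup_upper simp: zero_ereal_def)
qed

lemma nat_ceiling_bounds:
  assumes "x \<ge> (0::real)"
  shows "x \<le> real (nat \<lceil>x\<rceil>)" "real (nat \<lceil>x\<rceil>) \<le> x + 1"
  using assms by (auto simp: of_nat_nat)

lemma lnln_bound:
  fixes N A n Ms :: nat
  assumes N: "N \<le> (A ^ n) ^ Ms" and n: "n \<ge> 1"
    and Ms: "real Ms \<le> 2 * exp (real n * E)" and E: "E + d \<ge> 0" "E \<ge> 0"
    and L: "ln 2 + ln (real n) + ln (ln (real A)) \<le> real n * d"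
  shows "ln (ln (real N)) \<le> real n * (E + d)"
proof (cases "N \<le> 2")
  case True
  have "ln (ln (real N)) \<le> 0"
  proof -
    consider "N = 0" | "N = 1" | "N = 2" using True by linarith
    then show ?thesis
    proof cases
      case 3
      have "ln (2::real) < 1" using ln_2_less_1 by simp
      moreover have "ln (2::real) > 0" by simp
      ultimately show ?thesis using 3 by simp
    qed auto
  qed
  also have "0 \<le> real n * (E + d)" using E by simp
  finally show ?thesis .
next
  case False
  then have N3: "N \<ge> 3" by simp
  have A2: "A \<ge> 2"
  proof (rule ccontr)
    assume "\<not> A \<ge> 2"
    then have "A \<le> 1" by simp
    then have "(A ^ n) ^ Ms \<le> 1" by (intro power_le_one) auto
    then show False using N N3 by simp
  qed
  have Mspos: "Ms \<ge> 1"
  proof (rule ccontr)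
    assume "\<not> Ms \<ge> 1" then have "Ms = 0" by simp
    then show False using N N3 by simp
  qed
  have lnA: "ln (real A) > 0" using A2 by simp
  have "real N \<le> real ((A ^ n) ^ Ms)" using N by (simp only: of_nat_le_iff)
  then have "ln (real N) \<le> ln (real ((A ^ n) ^ Ms))" using N3 by (intro ln_mono) auto
  also have "\<dots> = real Ms * (real n * ln (real A))" using A2 by (simp add: ln_realpow)
  finally have lnN: "ln (real N) \<le> real Ms * real n * ln (real A)" by simp
  have lnNpos: "ln (real N) > 0" using N3 by simp
  have "ln (ln (real N)) \<le> ln (real Ms * real n * ln (real A))"
    using lnN lnNpos by simp
  also have "\<dots> = ln (real Ms) + ln (real n) + ln (ln (real A))"
    using Mspos n lnA by (simp add: ln_mult)
  also have "ln (real Ms) \<le> ln 2 + real n * E"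
  proof -
    have "ln (real Ms) \<le> ln (2 * exp (real n * E))" using Ms Mspos by simp
    also have "\<dots> = ln 2 + real n * E" by (simp add: ln_mult)
    finally show ?thesis .
  qed
  then have "ln (real Ms) + ln (real n) + ln (ln (real A)) \<le> real n * E + real n * d"
    using L by linarith
  finally show ?thesis by (simp add: algebra_simps)
qed

lemma converse_delta:
  fixes W :: "nat \<Rightarrow> ('a::finite) list \<Rightarrow> 'b measure"
  assumes gc: "general_channel W Y" and sc: "strong_converse W Y c \<Gamma>"
    and CsC: "Cs W Y c \<Gamma> = ereal C"
    and ne: "\<And>n. n \<ge> 1 \<Longrightarrow> cost_set c \<Gamma> n \<noteq> {}"
    and mu0: "mu \<ge> 0" and lam0: "lam \<ge> 0" and ml: "mu + lam < 1"
    and ic: "\<forall>n\<ge>1. idcode W Y c \<Gamma> n (N n) (Q n) (D n) (mus n) (lams n)"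
    and lsm: "limsup mus \<le> ereal mu" and lsl: "limsup lams \<le> ereal lam"
    and \<delta>: "\<delta> > 0"
  shows "Liminf sequentially (\<lambda>n. ereal (ln (ln (real (N n))) / real n)) \<le> ereal (C + 3 * \<delta>)"
proof -
  have C0: "C \<ge> 0" using Cs_nonneg[OF ne, of W Y] CsC by simp
  define \<theta> where "\<theta> = 1 - mu - lam"
  have \<theta>: "\<theta> > 0" using ml by (simp add: \<theta>_def)
  define \<alpha> where "\<alpha> = \<theta> / 16"
  have \<alpha>: "\<alpha> > 0" using \<theta> by (simp add: \<alpha>_def)
  define K where "K = (\<lambda>n::nat. exp (real n * (C + \<delta>)))"
  define Ms where "Ms = (\<lambda>n::nat. nat \<lceil>exp (real n * (C + 2 * \<delta>))\<rceil>)"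
  define Mf where "Mf = (\<lambda>n::nat. nat \<lceil>exp (real n * (C + \<delta> / 2))\<rceil>)"
  have Kpos: "K n > 0" for n by (simp add: K_def)
  have Mf_lb: "exp (real n * (C + \<delta> / 2)) \<le> real (Mf n)" for n
    unfolding Mf_def by (rule nat_ceiling_bounds) simp
  have Mf_ub: "real (Mf n) \<le> exp (real n * (C + \<delta> / 2)) + 1" for n
    unfolding Mf_def by (rule nat_ceiling_bounds) simp
  have Ms_lb: "exp (real n * (C + 2 * \<delta>)) \<le> real (Ms n)" for n
    unfolding Ms_def by (rule nat_ceiling_bounds) simp
  have Ms_ub: "real (Ms n) \<le> exp (real n * (C + 2 * \<delta>)) + 1" for n
    unfolding Ms_def by (rule nat_ceiling_bounds) simp
  have Mf1: "Mf n \<ge> 1" for n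
  proof -
    have "0 < exp (real n * (C + \<delta> / 2))" by simp
    then have "0 < real (Mf n)" using Mf_lb[of n] by linarith
    then show ?thesis by simp
  qed
  have Ms1: "Ms n > 0" for n
  proof -
    have "0 < exp (real n * (C + 2 * \<delta>))" by simp
    then have "0 < real (Ms n)" using Ms_lb[of n] by linarith
    then show ?thesis by simp
  qed
  have Dn: "D n i \<in> sets (Y n)" if "n \<ge> 1" "i \<in> {1..N n}" for n i
    using ic that by (auto simp: idcode_def)
  have Qn: "set_pmf (Q n i) \<subseteq> cost_set c \<Gamma> n" if "n \<ge> 1" "i \<in> {1..N n}" for n i
    using ic that by (auto simp: idcode_def)
  define bad where "bad = (\<lambda>n. \<exists>i\<in>{1..N n}. \<alpha> \<le> betach W Y n (N n) (D n) (K n) (Q n i))"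
  have codes: "\<exists>\<phi> \<psi> \<epsilon>. n \<ge> 1 \<longrightarrow> tcode W Y c \<Gamma> n (Mf n) \<phi> \<psi> \<epsilon> \<and>
       (bad n \<longrightarrow> \<epsilon> \<le> 1 - \<alpha> + real (Mf n) / K n)" for n
  proof (cases "n \<ge> 1")
    case n: True
    show ?thesis
    proof (cases "bad n")
      case True
      then obtain i where i: "i \<in> {1..N n}" "\<alpha> \<le> betach W Y n (N n) (D n) (K n) (Q n i)"
        unfolding bad_def by blast
      have "\<exists>\<phi> \<psi> \<epsilon>. tcode W Y c \<Gamma> n (Mf n) \<phi> \<psi> \<epsilon> \<and> \<epsilon> \<le> 1 - \<alpha> + real (Mf n) / K n"
        by (rule feinstein_code[where W=W and Y=Y and N="N n" and D="D n" and n=n,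
              OF gc Dn[OF n] Qn[OF n i(1)] Kpos Mf1 i(2)])
      then show ?thesis by blast
    next
      case False
      obtain x0 where "x0 \<in> cost_set c \<Gamma> n" using ne[OF n] by blast
      from trivial_code[OF this Mf1, of W Y] show ?thesis using False by blast
    qed
  qed simp
  then obtain \<phi> \<psi> \<epsilon> where code: "\<And>n. n \<ge> 1 \<Longrightarrow> tcode W Y c \<Gamma> n (Mf n) (\<phi> n) (\<psi> n) (\<epsilon> n) \<and>
       (bad n \<longrightarrow> \<epsilon> n \<le> 1 - \<alpha> + real (Mf n) / K n)"
    by metis
  have rate: "Liminf sequentially (\<lambda>n. ereal (ln (real (Mf n)) / real n)) \<ge> ereal (C + \<delta> / 2)"
  proof (rule Liminf_bounded)
    show "\<forall>\<^sub>F n in sequentially. ereal (C + \<delta> / 2) \<le> ereal (ln (real (Mf n)) / real n)"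
      using eventually_ge_at_top[of "1::nat"]
    proof eventually_elim
      case (elim n)
      have "ln (exp (real n * (C + \<delta> / 2))) \<le> ln (real (Mf n))"
        using Mf_lb[of n] by (intro ln_mono) auto
      then have "real n * (C + \<delta> / 2) \<le> ln (real (Mf n))" by simp
      then show ?case using elim by (simp add: field_simps)
    qed
  qed
  have "Liminf sequentially (\<lambda>n. ereal (ln (real (Mf n)) / real n)) > Cs W Y c \<Gamma>"
    using rate \<delta> CsC by (auto elim: less_le_trans[rotated])
  then have eps1: "\<epsilon> \<longlonglongrightarrow> 1"
    using sc code unfolding strong_converse_def by blast
  have ev_eps: "eventually (\<lambda>n. 1 - \<alpha> / 2 < \<epsilon> n) sequentially"
    using eps1 \<alpha> by (intro order_tendstoD(1)) auto
  have ev_MfK: "eventually (\<lambda>n. real (Mf n) / K n < \<alpha> / 2) sequentially"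
  proof -
    have "eventually (\<lambda>n. (exp (real n * (C + \<delta> / 2)) + 1) / exp (real n * (C + \<delta>)) < \<alpha> / 2) sequentially"
      using \<delta> \<alpha> C0 by real_asymp
    then show ?thesis
    proof eventually_elim
      case (elim n)
      have "real (Mf n) / K n \<le> (exp (real n * (C + \<delta> / 2)) + 1) / exp (real n * (C + \<delta>))"
        unfolding K_def by (intro divide_right_mono Mf_ub) auto
      then show ?case using elim by linarith
    qed
  qed
  have ev_notbad: "eventually (\<lambda>n. \<not> bad n) sequentially"
    using ev_eps ev_MfK eventually_ge_at_top[of "1::nat"]
  proof eventually_elim
    case (elim n)
    show ?case
    proof
      assume "bad n"
      then have "\<epsilon> n \<le> 1 - \<alpha> + real (Mf n) / K n" using code[of n] elim by blast
      then show False using elim by linarith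
    qed
  qed
  have ev_sqrt: "eventually (\<lambda>n. sqrt (K n / real (Ms n)) < \<theta> / 8) sequentially"
  proof -
    have "eventually (\<lambda>n. sqrt (exp (real n * (C + \<delta>)) / exp (real n * (C + 2 * \<delta>))) < \<theta> / 8) sequentially"
      using \<delta> \<theta> C0 by real_asymp
    then show ?thesis
    proof eventually_elim
      case (elim n)
      have "K n / real (Ms n) \<le> exp (real n * (C + \<delta>)) / exp (real n * (C + 2 * \<delta>))"
        unfolding K_def using Ms1[of n] by (intro divide_left_mono Ms_lb) auto
      then have "sqrt (K n / real (Ms n)) \<le> sqrt (exp (real n * (C + \<delta>)) / exp (real n * (C + 2 * \<delta>)))"
        by (rule real_sqrt_le_mono)
      then show ?case using elim by linarith
    qed
  qed
  have ev_mu: "eventually (\<lambda>n. mus n < ereal (mu + \<theta> / 4)) sequentially"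
    by (rule Limsup_lessD) (use lsm \<theta> in \<open>auto elim: le_less_trans\<close>)
  have ev_lam: "eventually (\<lambda>n. lams n < ereal (lam + \<theta> / 4)) sequentially"
    by (rule Limsup_lessD) (use lsl \<theta> in \<open>auto elim: le_less_trans\<close>)
  have ev_L: "eventually (\<lambda>n. ln 2 + ln (real n) + ln (ln (real CARD('a))) \<le> real n * \<delta>) sequentially"
    using \<delta> by real_asymp
  have ev_final: "eventually (\<lambda>n. ereal (ln (ln (real (N n))) / real n) \<le> ereal (C + 3 * \<delta>)) sequentially"
    using ev_notbad ev_sqrt ev_mu ev_lam ev_L eventually_ge_at_top[of "1::nat"]
  proof eventually_elim
    case (elim n)
    have nb: "betach W Y n (N n) (D n) (K n) (Q n i) \<le> \<alpha>" if "i \<in> {1..N n}" for i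
      using elim(1) that unfolding bad_def by force
    have Nb: "N n \<le> (CARD('a) ^ n) ^ Ms n"
    proof (rule id_card_bound[OF gc _ Kpos Ms1 nb])
      show "idcode W Y c \<Gamma> n (N n) (Q n) (D n) (mus n) (lams n)" using ic elim by auto
      show "mus n \<le> ereal (mu + \<theta> / 4)" using elim by simp
      show "lams n \<le> ereal (lam + \<theta> / 4)" using elim by simp
      show "2 * (2 * \<alpha> + sqrt (K n / real (Ms n))) < 1 - (mu + \<theta> / 4) - (lam + \<theta> / 4)"
        using elim(2) by (simp add: \<alpha>_def \<theta>_def field_simps)
    qed
    have Msb: "real (Ms n) \<le> 2 * exp (real n * (C + 2 * \<delta>))"
    proof -
      have "1 \<le> exp (real n * (C + 2 * \<delta>))" using C0 \<delta> by simp
      then show ?thesis using Ms_ub[of n] by linarith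
    qed
    have "ln (ln (real (N n))) \<le> real n * ((C + 2 * \<delta>) + \<delta>)"
      by (rule lnln_bound[OF Nb _ Msb]) (use elim C0 \<delta> in auto)
    then have "ln (ln (real (N n))) / real n \<le> C + 3 * \<delta>"
      using elim by (simp add: field_simps)
    then show ?case by simp
  qed
  have "Liminf sequentially (\<lambda>n. ereal (ln (ln (real (N n))) / real n)) \<le> Liminf sequentially (\<lambda>n. ereal (C + 3 * \<delta>))"
    by (rule Liminf_mono[OF ev_final])
  also have "\<dots> = ereal (C + 3 * \<delta>)" by (simp add: Liminf_const)
  finally show ?thesis .
qed

lemma expurgate:
  fixes err :: "nat \<Rightarrow> real"
  assumes nn: "\<And>i. err i \<ge> 0" and eps: "\<epsilon> = (\<Sum>i=1..M. err i) / real M" and M: "M \<ge> 1"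
  shows "real M \<le> 2 * real (card {i\<in>{1..M}. err i \<le> 2 * \<epsilon>})"
proof -
  let ?G = "{i\<in>{1..M}. err i \<le> 2 * \<epsilon>}" and ?B = "{i\<in>{1..M}. \<not> err i \<le> 2 * \<epsilon>}"
  have "card (?G \<union> ?B) = card ?G + card ?B" by (rule card_Un_disjoint) auto
  moreover have "?G \<union> ?B = {1..M}" by auto
  ultimately have cardGB: "card ?G + card ?B = M" by simp
  have sumM: "(\<Sum>i=1..M. err i) = real M * \<epsilon>" using eps M by simp
  have "2 * real (card ?B) \<le> real M"
  proof (cases "?B = {}")
    case True
    have c0: "card ?B = 0" unfolding True by simp
    show ?thesis by (simp only: c0)
  next
    case False
    have "(\<Sum>i\<in>?B. 2 * \<epsilon>) < (\<Sum>i\<in>?B. err i)"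
      using False by (intro sum_strict_mono) auto
    also have "\<dots> \<le> (\<Sum>i=1..M. err i)" using nn by (intro sum_mono2) auto
    finally have lt: "2 * \<epsilon> * real (card ?B) < real M * \<epsilon>" using sumM by (simp add: mult.commute)
    have "\<epsilon> \<ge> 0" using eps nn by (simp add: sum_nonneg)
    then have "\<epsilon> > 0" using lt by (cases "\<epsilon> = 0") auto
    then show ?thesis using lt by (simp add: mult.commute)
  qed
  then show ?thesis using cardGB by linarith
qed

lemma idx_bound: "k < K \<Longrightarrow> a < (q::nat) \<Longrightarrow> k * q + a < K * q"
proof -
  assume "k < K" "a < q"
  then have "k * q + a < k * q + q" by simp
  also have "\<dots> = (k + 1) * q" by simp
  also have "\<dots> \<le> K * q" using \<open>k < K\<close> by (intro mult_right_mono) auto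
  finally show ?thesis .
qed

lemma idx_inj: "a < (q::nat) \<Longrightarrow> a' < q \<Longrightarrow> k * q + a = k' * q + a' \<Longrightarrow> k = k' \<and> a = a'"
proof -
  assume a: "a < q" "a' < q" and eq: "k * q + a = k' * q + a'"
  have "(k * q + a) div q = k" "(k * q + a) mod q = a" using a by auto
  moreover have "(k' * q + a') div q = k'" "(k' * q + a') mod q = a'" using a by auto
  ultimately show ?thesis using eq by metis
qed

lemma outprob_map_uniform:
  assumes "K \<ge> (1::nat)"
  shows "outprob W n (map_pmf g (pmf_of_set {..<K})) B = (\<Sum>k<K. measure (W n (g k)) B) / real K"
proof -
  have "0 \<in> {..<K}" using assms by simp
  then have ne: "{..<K} \<noteq> {}" by blast
  show ?thesis
    unfolding outprob_def using ne by (subst integral_map_pmf, subst integral_pmf_of_set) auto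
qed

lemma id_from_tcode:
  fixes W :: "nat \<Rightarrow> ('a::finite) list \<Rightarrow> 'b measure"
  assumes gc: "general_channel W Y" and tc: "tcode W Y c \<Gamma> n M \<phi> \<psi> \<epsilon>"
    and K: "K \<ge> 1" and q: "q \<ge> 1" and Kq: "2 * (K * q) \<le> M" and t: "t \<le> K"
  shows "\<exists>N Q D mu_n lam_n. idcode W Y c \<Gamma> n N Q D mu_n lam_n \<and> mu_n \<le> ereal (2 * \<epsilon>) \<and>
     lam_n \<le> ereal (real t / real K + 2 * \<epsilon>) \<and> real q ^ K \<le> real N * (2 ^ K * real q ^ (K - t))"
proof -
  have M: "M \<ge> 1" and \<phi>: "\<And>i. i \<in> {1..M} \<Longrightarrow> \<phi> i \<in> cost_set c \<Gamma> n"
    and \<psi>: "\<psi> \<in> measurable (Y n) (count_space {1..M})"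
    and \<epsilon>: "\<epsilon> = (\<Sum>i=1..M. measure (W n (\<phi> i)) (space (Y n) - \<psi> -` {i})) / real M"
    using tc by (auto simp: tcode_def)
  define err where "err = (\<lambda>i. measure (W n (\<phi> i)) (space (Y n) - \<psi> -` {i}))"
  have errnn: "err i \<ge> 0" for i by (simp add: err_def)
  have eps0: "\<epsilon> \<ge> 0" using \<epsilon> errnn by (simp add: err_def sum_nonneg)
  define G where "G = {i\<in>{1..M}. err i \<le> 2 * \<epsilon>}"
  have "real M \<le> 2 * real (card G)"
    unfolding G_def by (rule expurgate[OF errnn _ M]) (simp add: \<epsilon> err_def)
  then have cardG: "K * q \<le> card G" using Kq by linarith
  obtain e where e: "e ` {..<K*q} \<subseteq> G" "inj_on e {..<K*q}"
    using card_le_inj[of "{..<K*q}" G] cardG by (auto simp: G_def)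
  define m where "m = (\<lambda>k a. e (k * q + a))"
  have mG: "m k a \<in> G" if "k < K" "a < q" for k a
    using e(1) idx_bound[OF that] by (auto simp: m_def)
  have minj: "m k a = m k' a' \<Longrightarrow> k = k' \<and> a = a'" if "k < K" "a < q" "k' < K" "a' < q" for k a k' a'
    using e(2) idx_bound[OF that(1,2)] idx_bound[OF that(3,4)] idx_inj[OF that(2,4)]
    unfolding m_def inj_on_def by blast
  have mM: "m k a \<in> {1..M}" and merr: "err (m k a) \<le> 2 * \<epsilon>" if "k < K" "a < q" for k a
    using mG[OF that] by (auto simp: G_def)
  have mlen: "length (\<phi> (m k a)) = n" if "k < K" "a < q" for k a
    using \<phi>[OF mM[OF that]] by (rule cost_len)
  obtain F where F: "F \<subseteq> PiE {..<K} (\<lambda>_. {..<q})" "\<forall>f\<in>F. \<forall>g\<in>F. f \<noteq> g \<longrightarrow> agree K f g < t"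
      "q ^ K \<le> card F * (2 ^ K * q ^ (K - t))"
    using gv_family[OF t, of q] by blast
  have finF: "finite F" using F(1) by (rule finite_subset) (auto intro: finite_PiE)
  define N where "N = card F"
  have N1: "N \<ge> 1"
  proof (rule ccontr)
    assume "\<not> N \<ge> 1" then have "N = 0" by simp
    then show False using F(3) q by (simp add: N_def)
  qed
  obtain fe where fe: "bij_betw fe {1..N} F" using ex_bij_betw_nat_finite_1[OF finF] by (auto simp: N_def)
  have feF: "fe i \<in> F" if "i \<in> {1..N}" for i using fe that by (auto simp: bij_betw_def)
  have feq: "fe i k < q" if "i \<in> {1..N}" "k < K" for i k using F(1) feF[OF that(1)] that(2) by auto
  define Q where "Q = (\<lambda>i. map_pmf (\<lambda>k. \<phi> (m k (fe i k))) (pmf_of_set {..<K}))"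
  define D where "D = (\<lambda>i. \<Union>k<K. \<psi> -` {m k (fe i k)} \<inter> space (Y n))"
  have \<psi>sets: "\<psi> -` {a} \<inter> space (Y n) \<in> sets (Y n)" for a
  proof (cases "a \<in> {1..M}")
    case True then show ?thesis using \<psi> by (intro measurable_sets) auto
  next
    case False
    have "\<psi> -` {a} \<inter> space (Y n) = {}" using measurable_space[OF \<psi>] False by auto
    then show ?thesis by simp
  qed
  have Dsets: "D i \<in> sets (Y n)" for i
  proof -
    have "D i = (\<Union>k\<in>{..<K}. \<psi> -` {m k (fe i k)} \<inter> space (Y n))" by (simp add: D_def)
    also have "\<dots> \<in> sets (Y n)" using \<psi>sets by (intro sets.finite_UN) auto
    finally show ?thesis .
  qed
  have "0 \<in> {..<K}" using K by simp
  then have setU: "set_pmf (pmf_of_set {..<K}) = {..<K}" by (intro set_pmf_of_set) auto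
  have setQ: "set_pmf (Q i) \<subseteq> cost_set c \<Gamma> n" if "i \<in> {1..N}" for i
    unfolding Q_def using \<phi> mM feq[OF that] by (auto simp: setU)
  have outQ: "outprob W n (Q i) B = (\<Sum>k<K. measure (W n (\<phi> (m k (fe i k)))) B) / real K" for i B
    unfolding Q_def by (rule outprob_map_uniform[OF K])
  have errle: "measure (W n (\<phi> (m k a))) B \<le> 2 * \<epsilon>"
    if "k < K" "a < q" "B \<subseteq> space (Y n) - \<psi> -` {m k a}" for k a B
  proof -
    interpret prob_space "W n (\<phi> (m k a))" using gc_prob[OF gc mlen[OF that(1,2)]] .
    have S: "sets (W n (\<phi> (m k a))) = sets (Y n)" using gc_sets[OF gc mlen[OF that(1,2)]] .
    have "space (Y n) - \<psi> -` {m k a} = space (Y n) - (\<psi> -` {m k a} \<inter> space (Y n))" by auto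
    then have Bs: "space (Y n) - \<psi> -` {m k a} \<in> sets (W n (\<phi> (m k a)))" using \<psi>sets S by auto
    have "measure (W n (\<phi> (m k a))) B \<le> measure (W n (\<phi> (m k a))) (space (Y n) - \<psi> -` {m k a})"
      by (rule finite_measure_mono[OF that(3) Bs])
    also have "\<dots> = err (m k a)" by (simp add: err_def)
    also have "\<dots> \<le> 2 * \<epsilon>" by (rule merr[OF that(1,2)])
    finally show ?thesis .
  qed
  define mu_n where "mu_n = (SUP i\<in>{1..N}. ereal (outprob W n (Q i) (space (Y n) - D i)))"
  define lam_n where "lam_n = (SUP ij\<in>{(i,j). i\<in>{1..N} \<and> j\<in>{1..N} \<and> i \<noteq> j}.
              ereal (outprob W n (Q (snd ij)) (D (fst ij))))"
  have ic: "idcode W Y c \<Gamma> n N Q D mu_n lam_n"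
    unfolding idcode_def mu_n_def lam_n_def using N1 setQ Dsets by auto
  have mu_b: "mu_n \<le> ereal (2 * \<epsilon>)"
    unfolding mu_n_def
  proof (rule SUP_least)
    fix i assume i: "i \<in> {1..N}"
    have "(\<Sum>k<K. measure (W n (\<phi> (m k (fe i k)))) (space (Y n) - D i)) \<le> (\<Sum>k<K. 2 * \<epsilon>)"
    proof (rule sum_mono)
      fix k assume k: "k \<in> {..<K}"
      show "measure (W n (\<phi> (m k (fe i k)))) (space (Y n) - D i) \<le> 2 * \<epsilon>"
        using k feq[OF i] by (intro errle) (auto simp: D_def)
    qed
    then have "outprob W n (Q i) (space (Y n) - D i) \<le> 2 * \<epsilon>"
      unfolding outQ using K by (simp add: divide_le_eq mult.commute)
    then show "ereal (outprob W n (Q i) (space (Y n) - D i)) \<le> ereal (2 * \<epsilon>)" by simp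
  qed
  have lam_b: "lam_n \<le> ereal (real t / real K + 2 * \<epsilon>)"
    unfolding lam_n_def
  proof (rule SUP_least)
    fix ij assume "ij \<in> {(i,j). i\<in>{1..N} \<and> j\<in>{1..N} \<and> i \<noteq> j}"
    then obtain i j where ij: "ij = (i,j)" and i: "i \<in> {1..N}" and j: "j \<in> {1..N}" and ne: "i \<noteq> j" by auto
    have fne: "fe i \<noteq> fe j"
    proof
      assume "fe i = fe j"
      then show False using inj_onD[OF bij_betw_imp_inj_on[OF fe] _ i j] ne by blast
    qed
    have ag: "agree K (fe i) (fe j) < t" using F(2) feF[OF i] feF[OF j] fne by blast
    have each: "measure (W n (\<phi> (m k (fe j k)))) (D i) \<le> (if fe i k = fe j k then 1 else 0) + 2 * \<epsilon>"
      if k: "k < K" for k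
    proof (cases "fe i k = fe j k")
      case True
      interpret prob_space "W n (\<phi> (m k (fe j k)))" using gc_prob[OF gc mlen[OF k feq[OF j k]]] .
      have p: "prob (D i) \<le> 1" by (rule prob_le_1)
      have e: "(if fe i k = fe j k then 1 else 0) = (1::real)" using True by simp
      show ?thesis unfolding e using p eps0 by linarith
    next
      case False
      have "D i \<subseteq> space (Y n) - \<psi> -` {m k (fe j k)}"
      proof
        fix y assume y: "y \<in> D i"
        then obtain k' where k': "k' < K" "\<psi> y = m k' (fe i k')" "y \<in> space (Y n)" by (auto simp: D_def)
        have "\<psi> y \<noteq> m k (fe j k)"
        proof
          assume "\<psi> y = m k (fe j k)"
          then have "m k' (fe i k') = m k (fe j k)" using k' by simp
          then have "k' = k \<and> fe i k' = fe j k" using minj[OF k'(1) feq[OF i k'(1)] k feq[OF j k]] by blast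
          then show False using False by metis
        qed
        then show "y \<in> space (Y n) - \<psi> -` {m k (fe j k)}" using k' by simp
      qed
      then show ?thesis using errle[OF k feq[OF j k]] False by simp
    qed
    have "(\<Sum>k<K. measure (W n (\<phi> (m k (fe j k)))) (D i)) \<le> (\<Sum>k<K. (if fe i k = fe j k then 1 else 0) + 2 * \<epsilon>)"
      by (intro sum_mono each) simp
    also have "\<dots> = real (agree K (fe i) (fe j)) + real K * (2 * \<epsilon>)"
      by (simp add: sum.distrib agree_def sum.If_cases Int_def)
    also have "\<dots> \<le> real t + real K * (2 * \<epsilon>)" using ag by simp
    finally have "outprob W n (Q j) (D i) \<le> (real t + real K * (2 * \<epsilon>)) / real K"
      unfolding outQ using K by (simp add: divide_right_mono)
    also have "\<dots> = real t / real K + 2 * \<epsilon>" using K by (simp add: field_simps)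
    finally show "ereal (outprob W n (Q (snd ij)) (D (fst ij))) \<le> ereal (real t / real K + 2 * \<epsilon>)"
      using ij by simp
  qed
  have "real (q ^ K) \<le> real (card F * (2 ^ K * q ^ (K - t)))" using F(3) by (simp only: of_nat_le_iff)
  then have Nb: "real q ^ K \<le> real N * (2 ^ K * real q ^ (K - t))" by (simp add: N_def)
  show ?thesis using ic mu_b lam_b Nb by blast
qed

lemma rate_lemma:
  fixes N K q t :: nat
  assumes q: "q \<ge> 2" and K: "K \<ge> 1" and t: "t \<le> K"
    and tq: "real K * ln 4 \<le> real t * ln (real q)"
    and Nb: "real q ^ K \<le> real N * (2 ^ K * real q ^ (K - t))"
  shows "ln (real K) + ln (ln 2) \<le> ln (ln (real N))"
proof -
  have qpos: "real q > 0" using q by simp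
  have Npos: "real N > 0"
  proof (rule ccontr)
    assume "\<not> real N > 0" then have "N = 0" by simp
    then have z: "real N * (2 ^ K * real q ^ (K - t)) = 0" by simp
    have p: "real q ^ K > 0" using qpos by (rule zero_less_power)
    show False using Nb z p by linarith
  qed
  have "ln (real q ^ K) \<le> ln (real N * (2 ^ K * real q ^ (K - t)))"
    using Nb qpos by (intro ln_mono) auto
  then have "real K * ln (real q) \<le> ln (real N) + real K * ln 2 + real (K - t) * ln (real q)"
    using Npos qpos by (simp add: ln_mult ln_realpow)
  then have "real K * ln (real q) \<le> ln (real N) + real K * ln 2 + (real K - real t) * ln (real q)"
    using t by (simp add: of_nat_diff)
  then have "real t * ln (real q) - real K * ln 2 \<le> ln (real N)" by (simp add: algebra_simps)
  moreover have "real K * ln 4 = 2 * (real K * ln 2)"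
  proof -
    have "ln (4::real) = ln (2 * 2)" by simp
    also have "\<dots> = 2 * ln 2" by (subst ln_mult) auto
    finally show ?thesis by simp
  qed
  ultimately have lnN: "real K * ln 2 \<le> ln (real N)" using tq by linarith
  have pos: "0 < real K * ln 2" using K by simp
  have "ln (real K) + ln (ln 2) = ln (real K * ln 2)" using K by (simp add: ln_mult)
  also have "\<dots> \<le> ln (ln (real N))" using lnN pos by (intro ln_mono) auto
  finally show ?thesis .
qed

lemma real_div_lb:
  fixes a b :: nat
  assumes "b > 0"
  shows "real a / real b - 1 \<le> real (a div b)"
proof -
  have "a = b * (a div b) + a mod b" by simp
  then have "real a = real b * real (a div b) + real (a mod b)" by (metis of_nat_add of_nat_mult)
  moreover have "real (a mod b) < real b" using assms by simp
  ultimately have "real a < real b * (real (a div b) + 1)" by (simp add: algebra_simps)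
  then have "real a / real b < real (a div b) + 1" using assms by (simp add: divide_less_eq mult.commute)
  then show ?thesis by simp
qed

lemma trivial_idcode:
  assumes x0: "x0 \<in> cost_set c \<Gamma> n"
  shows "idcode W Y c \<Gamma> n 1 (\<lambda>_. return_pmf x0) (\<lambda>_. space (Y n)) (ereal 0) (-\<infinity>)"
proof -
  have e: "{(i, j). i \<in> {1..1::nat} \<and> j \<in> {1..1} \<and> i \<noteq> j} = {}" by auto
  show ?thesis
    unfolding idcode_def e using x0 by (simp add: outprob_def bot_ereal_def)
qed

lemma limsup_le_0:
  fixes f :: "nat \<Rightarrow> ereal"
  assumes "\<And>\<eta>. \<eta> > 0 \<Longrightarrow> eventually (\<lambda>n. f n < ereal \<eta>) sequentially"
  shows "limsup f \<le> 0"
proof (subst Limsup_le_iff, intro allI impI)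
  fix y :: ereal assume y: "y > 0"
  show "eventually (\<lambda>n. y > f n) sequentially"
  proof (cases y)
    case (real r)
    then have "r > 0" using y by simp
    then show ?thesis using assms[of r] real by simp
  next
    case PInf
    have "eventually (\<lambda>n. f n < ereal 1) sequentially" using assms[of 1] by simp
    then show ?thesis by eventually_elim (use PInf in auto)
  next
    case MInf then show ?thesis using y by simp
  qed
qed

lemma direct_pos:
  fixes W :: "nat \<Rightarrow> ('a::finite) list \<Rightarrow> 'b measure"
  assumes gc: "general_channel W Y"
    and tcs: "\<forall>n\<ge>1. tcode W Y c \<Gamma> n (M n) (\<phi> n) (\<psi> n) (\<epsilon> n)" and eps: "\<epsilon> \<longlonglongrightarrow> 0"
    and rate: "Liminf sequentially (\<lambda>n. ereal (ln (real (M n)) / real n)) \<ge> ereal R0"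
    and r: "0 < r" "r < R0" and mu0: "mu \<ge> 0" and lam0: "lam \<ge> 0"
  shows "id_achievable W Y c \<Gamma> mu lam r"
proof -
  define \<kappa> where "\<kappa> = (R0 - r) / 2"
  have \<kappa>: "\<kappa> > 0" using r by (simp add: \<kappa>_def)
  have evM0: "eventually (\<lambda>n. ereal (r + \<kappa>) < ereal (ln (real (M n)) / real n)) sequentially"
  proof -
    have "\<forall>y<ereal R0. eventually (\<lambda>n. y < ereal (ln (real (M n)) / real n)) sequentially"
      using rate unfolding le_Liminf_iff .
    moreover have "ereal (r + \<kappa>) < ereal R0" using r by (simp add: \<kappa>_def field_simps)
    ultimately show ?thesis by blast
  qed
  have evM: "eventually (\<lambda>n. exp (real n * (r + \<kappa>)) \<le> real (M n)) sequentially"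
    using evM0 eventually_ge_at_top[of "1::nat"]
  proof eventually_elim
    case (elim n)
    have M1: "M n \<ge> 1" using tcs elim(2) by (auto simp: tcode_def)
    have "real n * (r + \<kappa>) < ln (real (M n))" using elim by (simp add: field_simps)
    then have "exp (real n * (r + \<kappa>)) < exp (ln (real (M n)))" by simp
    then show ?case using M1 by simp
  qed
  define q where "q = (\<lambda>n::nat. n + 2)"
  define K where "K = (\<lambda>n. M n div (2 * q n))"
  define t where "t = (\<lambda>n. nat \<lceil>real (K n) * ln 4 / ln (real (q n))\<rceil>)"
  define X where "X = (\<lambda>n::nat. exp (real n * (r + \<kappa>)) / (2 * (real n + 2)) - 1)"
  define good where "good = (\<lambda>n. n \<ge> 2 \<and> exp (real n * (r + \<kappa>)) \<le> real (M n) \<and> 1 \<le> X n)"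
  have lnq: "ln 4 \<le> ln (real (q n))" "ln (real (q n)) > 0" if "n \<ge> 2" for n
    using that by (auto simp: q_def)
  have KX: "X n \<le> real (K n)" if "good n" for n
  proof -
    have "real (M n) / real (2 * q n) - 1 \<le> real (K n)" unfolding K_def by (rule real_div_lb) (simp add: q_def)
    moreover have "exp (real n * (r + \<kappa>)) / (2 * (real n + 2)) \<le> real (M n) / real (2 * q n)"
    proof -
      have "real (2 * q n) = 2 * (real n + 2)" by (simp add: q_def)
      moreover have "exp (real n * (r + \<kappa>)) \<le> real (M n)" using that by (simp add: good_def)
      ultimately show ?thesis by (simp add: divide_right_mono)
    qed
    ultimately show ?thesis by (simp add: X_def)
  qed
  have K1: "K n \<ge> 1" if "good n" for n
  proof -
    have "1 \<le> real (K n)" using KX[OF that] that by (simp add: good_def)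
    then show ?thesis by simp
  qed
  have tK: "t n \<le> K n" if "good n" for n
  proof -
    have n2: "n \<ge> 2" using that by (simp add: good_def)
    have h: "real (K n) * ln 4 / ln (real (q n)) \<le> real (K n)"
      using lnq[OF n2] by (simp add: divide_le_eq mult_left_mono)
    then show ?thesis unfolding t_def by (simp add: nat_le_iff ceiling_le_iff)
  qed
  have tq: "real (K n) * ln 4 \<le> real (t n) * ln (real (q n))" if "good n" for n
  proof -
    have n2: "n \<ge> 2" using that by (simp add: good_def)
    have "real (K n) * ln 4 / ln (real (q n)) \<le> real (t n)"
      unfolding t_def using lnq[OF n2] by (intro nat_ceiling_bounds) simp
    then show ?thesis using lnq[OF n2] by (simp add: divide_le_eq)
  qed
  have tub: "real (t n) \<le> real (K n) * ln 4 / ln (real (q n)) + 1" if "good n" for n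
  proof -
    have n2: "n \<ge> 2" using that by (simp add: good_def)
    show ?thesis unfolding t_def using lnq[OF n2] by (intro nat_ceiling_bounds) simp
  qed
  have KqM: "2 * (K n * q n) \<le> M n" for n
  proof -
    have "M n div (2 * q n) * (2 * q n) \<le> M n" by (rule div_times_less_eq_dividend)
    then show ?thesis by (simp add: K_def algebra_simps)
  qed
  have codes: "\<exists>N Q D mu_n lam_n. n \<ge> 1 \<longrightarrow> idcode W Y c \<Gamma> n N Q D mu_n lam_n \<and>
      (good n \<longrightarrow> mu_n \<le> ereal (2 * \<epsilon> n) \<and> lam_n \<le> ereal (real (t n) / real (K n) + 2 * \<epsilon> n) \<and>
         real (q n) ^ K n \<le> real N * (2 ^ K n * real (q n) ^ (K n - t n)))" for n
  proof (cases "n \<ge> 1")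
    case n1: True
    have tc: "tcode W Y c \<Gamma> n (M n) (\<phi> n) (\<psi> n) (\<epsilon> n)" using tcs n1 by auto
    show ?thesis
    proof (cases "good n")
      case True
      from id_from_tcode[OF gc tc K1[OF True] _ KqM tK[OF True]]
      show ?thesis by (simp add: q_def) blast
    next
      case False
      have "\<phi> n 1 \<in> cost_set c \<Gamma> n" using tc by (auto simp: tcode_def)
      from trivial_idcode[OF this, of W Y] show ?thesis using False by blast
    qed
  qed simp
  then obtain N Q D mus lams where code: "\<And>n. n \<ge> 1 \<Longrightarrow> idcode W Y c \<Gamma> n (N n) (Q n) (D n) (mus n) (lams n) \<and>
      (good n \<longrightarrow> mus n \<le> ereal (2 * \<epsilon> n) \<and> lams n \<le> ereal (real (t n) / real (K n) + 2 * \<epsilon> n) \<and>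
         real (q n) ^ K n \<le> real (N n) * (2 ^ K n * real (q n) ^ (K n - t n)))"
    by metis
  have evX1: "eventually (\<lambda>n. 1 \<le> X n) sequentially"
    unfolding X_def using r \<kappa> by real_asymp
  have evgood: "eventually good sequentially"
    using evM evX1 eventually_ge_at_top[of "2::nat"] by eventually_elim (simp add: good_def)
  have evrate: "eventually (\<lambda>n. real n * r \<le> ln (X n) + ln (ln 2)) sequentially"
    unfolding X_def using r \<kappa> by real_asymp
  have liminf: "Liminf sequentially (\<lambda>n. ereal (ln (ln (real (N n))) / real n)) \<ge> ereal r"
  proof (rule Liminf_bounded)
    show "eventually (\<lambda>n. ereal r \<le> ereal (ln (ln (real (N n))) / real n)) sequentially"
      using evgood evrate
    proof eventually_elim
      case (elim n)
      have n2: "n \<ge> 2" using elim by (simp add: good_def)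
      have c: "real (q n) ^ K n \<le> real (N n) * (2 ^ K n * real (q n) ^ (K n - t n))"
        using code[of n] n2 elim by auto
      have "ln (real (K n)) + ln (ln 2) \<le> ln (ln (real (N n)))"
        by (rule rate_lemma[OF _ K1[OF elim(1)] tK[OF elim(1)] tq[OF elim(1)] c]) (simp add: q_def)
      moreover have "ln (X n) \<le> ln (real (K n))"
        using KX[OF elim(1)] elim(1) by (intro ln_mono) (auto simp: good_def)
      ultimately have "real n * r \<le> ln (ln (real (N n)))" using elim(2) by linarith
      then show ?case using n2 by (simp add: field_simps)
    qed
  qed
  have limmu: "limsup mus \<le> ereal mu"
  proof -
    have "limsup mus \<le> 0"
    proof (rule limsup_le_0)
      fix \<eta> :: real assume \<eta>: "\<eta> > 0"
      have "eventually (\<lambda>n. \<epsilon> n < \<eta> / 2) sequentially"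
        using eps \<eta> by (intro order_tendstoD(2)) auto
      then show "eventually (\<lambda>n. mus n < ereal \<eta>) sequentially"
        using evgood eventually_ge_at_top[of "1::nat"]
      proof eventually_elim
        case (elim n)
        have "mus n \<le> ereal (2 * \<epsilon> n)" using code[of n] elim by auto
        also have "\<dots> < ereal \<eta>" using elim by simp
        finally show ?case .
      qed
    qed
    then show ?thesis using mu0 by (simp add: zero_ereal_def order_trans)
  qed
  have limlam: "limsup lams \<le> ereal lam"
  proof -
    have "limsup lams \<le> 0"
    proof (rule limsup_le_0)
      fix \<eta> :: real assume \<eta>: "\<eta> > 0"
      have ev1: "eventually (\<lambda>n. \<epsilon> n < \<eta> / 6) sequentially"
        using eps \<eta> by (intro order_tendstoD(2)) auto
      have ev2: "eventually (\<lambda>n. ln 4 / ln (real (q n)) < \<eta> / 3) sequentially"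
        unfolding q_def using \<eta> by real_asymp
      have ev3: "eventually (\<lambda>n. 1 / X n < \<eta> / 3) sequentially"
        unfolding X_def using \<eta> r \<kappa> by real_asymp
      show "eventually (\<lambda>n. lams n < ereal \<eta>) sequentially"
        using ev1 ev2 ev3 evgood eventually_ge_at_top[of "1::nat"]
      proof eventually_elim
        case (elim n)
        have g: "good n" using elim by simp
        have n2: "n \<ge> 2" using g by (simp add: good_def)
        have Kpos: "real (K n) > 0" using K1[OF g] by simp
        have "real (t n) / real (K n) \<le> (real (K n) * ln 4 / ln (real (q n)) + 1) / real (K n)"
          using tub[OF g] Kpos by (intro divide_right_mono) auto
        also have "\<dots> = ln 4 / ln (real (q n)) + 1 / real (K n)" using Kpos by (simp add: field_simps)
        also have "1 / real (K n) \<le> 1 / X n"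
          using KX[OF g] g by (intro divide_left_mono) (auto simp: good_def)
        finally have "real (t n) / real (K n) < \<eta> / 3 + \<eta> / 3" using elim by linarith
        then have "real (t n) / real (K n) + 2 * \<epsilon> n < \<eta>" using elim by linarith
        moreover have "lams n \<le> ereal (real (t n) / real (K n) + 2 * \<epsilon> n)" using code[of n] elim by auto
        ultimately show ?case by (meson ereal_less_eq(3) le_less_trans less_ereal.simps(1))
      qed
    qed
    then show ?thesis using lam0 by (simp add: zero_ereal_def order_trans)
  qed
  show ?thesis unfolding id_achievable_def
    using code liminf limmu limlam by blast
qed

lemma id_ach_nonpos:
  fixes W :: "nat \<Rightarrow> ('a::finite) list \<Rightarrow> 'b measure"
  assumes ne: "\<And>n. n \<ge> 1 \<Longrightarrow> cost_set c \<Gamma> n \<noteq> {}"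
    and r: "r \<le> 0" and mu0: "mu \<ge> 0" and lam0: "lam \<ge> 0"
  shows "id_achievable W Y c \<Gamma> mu lam r"
proof -
  define x0 where "x0 = (\<lambda>n. SOME x. x \<in> cost_set c \<Gamma> n)"
  have x0: "x0 n \<in> cost_set c \<Gamma> n" if "n \<ge> 1" for n
    unfolding x0_def using ne[OF that] by (simp add: some_in_eq)
  have ic: "\<forall>n\<ge>1. idcode W Y c \<Gamma> n ((\<lambda>_. 1) n) ((\<lambda>n _. return_pmf (x0 n)) n)
      ((\<lambda>n _. space (Y n)) n) ((\<lambda>_. ereal 0) n) ((\<lambda>_. -\<infinity>) n)"
    using trivial_idcode[OF x0] by auto
  have "limsup (\<lambda>_. ereal 0) \<le> ereal mu" using mu0 by (simp add: Limsup_const)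
  moreover have "limsup (\<lambda>_::nat. -\<infinity>::ereal) \<le> ereal lam" by (simp add: Limsup_const)
  moreover have "Liminf sequentially (\<lambda>n. ereal (ln (ln (real ((\<lambda>_::nat. 1::nat) n))) / real n)) \<ge> ereal r"
    using r by (simp add: Liminf_const)
  ultimately show ?thesis unfolding id_achievable_def using ic
    by (intro exI[of _ "\<lambda>_. 1"] exI[of _ "\<lambda>n _. return_pmf (x0 n)"] exI[of _ "\<lambda>n _. space (Y n)"]
        exI[of _ "\<lambda>_. ereal 0"] exI[of _ "\<lambda>_. -\<infinity>"]) simp
qed

theorem corollary5p1:
  fixes W :: "nat \<Rightarrow> ('a::finite) list \<Rightarrow> 'b measure"
    and Y :: "nat \<Rightarrow> 'b measure"
    and c :: "nat \<Rightarrow> 'a list \<Rightarrow> real"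
    and \<Gamma> mu lam :: real
  assumes "general_channel W Y"
    and "strong_converse W Y c \<Gamma>"
    and "mu \<ge> 0" and "lam \<ge> 0" and "mu + lam < 1"
  shows "IDcap W Y c \<Gamma> mu lam = Cs W Y c \<Gamma>"
proof -
  note gc = assms(1) and sc = assms(2) and mu0 = assms(3) and lam0 = assms(4) and ml = assms(5)
  show ?thesis
  proof (cases "\<forall>n\<ge>1. cost_set c \<Gamma> n \<noteq> {}")
    case False
    then obtain n0 where n0: "n0 \<ge> 1" "cost_set c \<Gamma> n0 = {}" by auto
    have "\<not> tc_achievable W Y c \<Gamma> R" for R
    proof
      assume "tc_achievable W Y c \<Gamma> R"
      then obtain M \<phi> \<psi> \<epsilon> where "tcode W Y c \<Gamma> n0 (M n0) (\<phi> n0) (\<psi> n0) (\<epsilon> n0)"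
        unfolding tc_achievable_def using n0 by blast
      then show False using n0 by (auto simp: tcode_def)
    qed
    then have Cs: "Cs W Y c \<Gamma> = -\<infinity>" unfolding Cs_def by (simp add: bot_ereal_def)
    have "\<not> id_achievable W Y c \<Gamma> mu lam R" for R
    proof
      assume "id_achievable W Y c \<Gamma> mu lam R"
      then obtain N Q D mus lams where "idcode W Y c \<Gamma> n0 (N n0) (Q n0) (D n0) (mus n0) (lams n0)"
        unfolding id_achievable_def using n0 by blast
      then have "set_pmf (Q n0 1) \<subseteq> cost_set c \<Gamma> n0" by (auto simp: idcode_def)
      then show False using n0 set_pmf_not_empty[of "Q n0 1"] by auto
    qed
    then have ID: "IDcap W Y c \<Gamma> mu lam = -\<infinity>" unfolding IDcap_def by (simp add: bot_ereal_def)
    show ?thesis using Cs ID by simp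
  next
    case True
    then have ne: "\<And>n. n \<ge> 1 \<Longrightarrow> cost_set c \<Gamma> n \<noteq> {}" by auto
    have le: "IDcap W Y c \<Gamma> mu lam \<le> Cs W Y c \<Gamma>"
      unfolding IDcap_def
    proof (rule Sup_least, clarify)
      fix R assume ach: "id_achievable W Y c \<Gamma> mu lam R"
      have C0: "Cs W Y c \<Gamma> \<ge> 0" by (rule Cs_nonneg[OF ne])
      show "ereal R \<le> Cs W Y c \<Gamma>"
      proof (cases "Cs W Y c \<Gamma>")
        case PInf then show ?thesis by simp
      next
        case MInf then show ?thesis using C0 by simp
      next
        case (real C)
        obtain N Q D mus lams where ic: "\<forall>n\<ge>1. idcode W Y c \<Gamma> n (N n) (Q n) (D n) (mus n) (lams n)"
          and lsm: "limsup mus \<le> ereal mu" and lsl: "limsup lams \<le> ereal lam"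
          and lr: "Liminf sequentially (\<lambda>n. ereal (ln (ln (real (N n))) / real n)) \<ge> ereal R"
          using ach unfolding id_achievable_def by blast
        have "R \<le> C + 3 * \<delta>" if \<delta>: "\<delta> > 0" for \<delta>
        proof -
          have "ereal R \<le> ereal (C + 3 * \<delta>)"
            using lr converse_delta[OF gc sc real ne mu0 lam0 ml ic lsm lsl \<delta>] by (rule order_trans)
          then show ?thesis by simp
        qed
        then have "R \<le> C"
        proof (cases "R \<le> C")
          case False
          then have "R \<le> C + 3 * ((R - C) / 6)" using \<open>\<And>\<delta>. \<delta> > 0 \<Longrightarrow> R \<le> C + 3 * \<delta>\<close>[of "(R - C) / 6"] by simp
          then show ?thesis using False by (simp add: field_simps)
        qed simp
        then show ?thesis using real by simp
      qed
    qed
    have ge: "Cs W Y c \<Gamma> \<le> IDcap W Y c \<Gamma> mu lam"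
      unfolding Cs_def
    proof (rule Sup_least, clarify)
      fix R0 assume tca: "tc_achievable W Y c \<Gamma> R0"
      show "ereal R0 \<le> IDcap W Y c \<Gamma> mu lam"
      proof (rule ccontr)
        assume "\<not> ereal R0 \<le> IDcap W Y c \<Gamma> mu lam"
        then have "IDcap W Y c \<Gamma> mu lam < ereal R0" by simp
        then obtain r where r: "IDcap W Y c \<Gamma> mu lam < ereal r" "ereal r < ereal R0"
          using ereal_dense2 by blast
        have "id_achievable W Y c \<Gamma> mu lam r"
        proof (cases "r \<le> 0")
          case True
          show ?thesis by (rule id_ach_nonpos[where W=W and Y=Y and c=c and \<Gamma>=\<Gamma>, OF ne True mu0 lam0])
        next
          case False
          obtain M \<phi> \<psi> \<epsilon> where tcs: "\<forall>n\<ge>1. tcode W Y c \<Gamma> n (M n) (\<phi> n) (\<psi> n) (\<epsilon> n)"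
            and eps: "\<epsilon> \<longlonglongrightarrow> 0"
            and rate: "Liminf sequentially (\<lambda>n. ereal (ln (real (M n)) / real n)) \<ge> ereal R0"
            using tca unfolding tc_achievable_def by blast
          show ?thesis
            by (rule direct_pos[OF gc tcs eps rate _ _ mu0 lam0]) (use False r in auto)
        qed
        then have "ereal r \<le> IDcap W Y c \<Gamma> mu lam" unfolding IDcap_def by (auto intro: Sup_upper)
        then show False using r by simp
      qed
    qed
    show ?thesis using le ge by simp
  qed
qed

end
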